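(* Let $(y_1,x_1),\dots,(y_\ell,x_\ell)\in\mathbb{R}^3\times\mathbb{R}^3$ and $c_1^2,\dots,c_\ell^2\ge 0$. Then strong duality holds between (SDR) and (D), i.e., the optimal values of (SDR) and (D) are equal.
   Context: For $w\in\mathbb{S}^3$ (unit sphere of $\mathbb{R}^4$), $R(w)\in SO(3)$ denotes the rotation matrix associated to the unit quaternion $w=[w_1;w_2;w_3;w_4]$ by the standard formula $R(w)=\begin{bmatrix} w_1^2+w_2^2-w_3^2-w_4^2 & 2(w_2w_3-w_1w_4) & 2(w_2w_4+w_1w_3)\\ 2(w_2w_3+w_1w_4) & w_1^2+w_3^2-w_2^2-w_4^2 & 2(w_3w_4-w_1w_2)\\ 2(w_2w_4-w_1w_3) & 2(w_3w_4+w_1w_2) & w_1^2+w_4^2-w_2^2-w_3^2\end{bmatrix}$. For each $i$, $Q_i$ is the unique symmetric $4\times4$ matrix with $w^\top Q_i w=\|y_i-R(w)x_i\|_2^2$ for all $w\in\mathbb{S}^3$. For a matrix $\mathcal{A}\in\mathbb{R}^{4(\ell+1)\times 4(\ell+1)}$ and $i,j\in\{0,\dots,\ell\}$, $[\mathcal{A}]_{ij}$ is the $4\times 4$ block with rows $4i+1,\dots,4i+4$ and columns $4j+1,\dots,4j+4$. $\mathcal{Q}$ is the symmetric $4(\ell+1)\times4(\ell+1)$ matrix with $[\mathcal{Q}]_{0i}=[\mathcal{Q}]_{i0}=\tfrac12(Q_i-c_i^2I_4)$ for $i=1,\dots,\ell$ and all other blocks zero. (SDR) is the problem: minimize $\operatorname{tr}(\mathcal{Q}\mathcal{W})+\sum_{i=1}^\ell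 c_i^2$ over symmetric positive semidefinite $\mathcal{W}\in\mathbb{R}^{4(\ell+1)\times4(\ell+1)}$ subject to $[\mathcal{W}]_{0i}=[\mathcal{W}]_{ii}$ for $i=1,\dots,\ell$ and $\operatorname{tr}([\mathcal{W}]_{00})=1$. $\mathcal{B}$ is the $4(\ell+1)\times4(\ell+1)$ matrix that is zero except $[\mathcal{B}]_{00}=I_4$. An admissible dual matrix is a symmetric $\mathcal{D}\in\mathbb{R}^{4(\ell+1)\times4(\ell+1)}$ with $[\mathcal{D}]_{ii}+2[\mathcal{D}]_{0i}=0$ for $i=1,\dots,\ell$ and all blocks other than $[\mathcal{D}]_{ii},[\mathcal{D}]_{0i},[\mathcal{D}]_{i0}$ ($i\ge1$) equal to zero. (D) is the problem: maximize $\mu+\sum_{i=1}^\ell c_i^2$ over $\mu\in\mathbb{R}$ and admissible dual matrices $\mathcal{D}$ subject to $\mathcal{Q}-\mu\mathcal{B}-\mathcal{D}\succeq 0$. *)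

theory Defs
  imports "HOL-Analysis.Analysis"
begin

(* Rotation matrix R(w) of a unit quaternion w = [w1;w2;w3;w4]; components w$1,...,w$4
   (in the index type 4, the numeral 4 is a valid fourth, distinct index). *)
definition rotq :: "real^4 \<Rightarrow> real^3^3" where
  "rotq w = (let w1 = w$1; w2 = w$2; w3 = w$3; w4 = w$4 in
     vector [
       vector [w1^2+w2^2-w3^2-w4^2, 2*(w2*w3-w1*w4), 2*(w2*w4+w1*w3)],
       vector [2*(w2*w3+w1*w4), w1^2+w3^2-w2^2-w4^2, 2*(w3*w4-w1*w2)],
       vector [2*(w2*w4-w1*w3), 2*(w3*w4+w1*w2), w1^2+w4^2-w2^2-w3^2]])"

definition Qmat :: "real^3 \<Rightarrow> real^3 \<Rightarrow> real^4^4" where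
  "Qmat y x = (THE Q. transpose Q = Q \<and>
      (\<forall>w::real^4. norm w = 1 \<longrightarrow> w \<bullet> (Q *v w) = (norm (y - rotq w *v x))^2))"

definition idx4 :: "nat \<Rightarrow> 4" where
  "idx4 p = of_nat (Suc p)"

(* Big matrices of size 4(l+1) are represented as nat \<Rightarrow> nat \<Rightarrow> real, only entries
   with indices < 4(l+1) being relevant.  Entry (4i+p, 4j+q), p,q<4, is entry (p,q)
   of block [A]_{ij}. *)
definition dimS :: "nat \<Rightarrow> nat" where
  "dimS l = 4 * (l + 1)"

definition psd :: "nat \<Rightarrow> (nat \<Rightarrow> nat \<Rightarrow> real) \<Rightarrow> bool" where
  "psd n A \<longleftrightarrow> (\<forall>a<n. \<forall>b<n. A a b = A b a) \<and>
     (\<forall>v::nat \<Rightarrow> real. 0 \<le> (\<Sum>a<n. \<Sum>b<n. v a * A a b * v b))"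

definition mtrace :: "nat \<Rightarrow> (nat \<Rightarrow> nat \<Rightarrow> real) \<Rightarrow> real" where
  "mtrace n A = (\<Sum>a<n. A a a)"

definition mmult :: "nat \<Rightarrow> (nat \<Rightarrow> nat \<Rightarrow> real) \<Rightarrow> (nat \<Rightarrow> nat \<Rightarrow> real) \<Rightarrow> nat \<Rightarrow> nat \<Rightarrow> real" where
  "mmult n A B = (\<lambda>a b. \<Sum>k<n. A a k * B k b)"

definition bigQ :: "nat \<Rightarrow> (nat \<Rightarrow> real^3) \<Rightarrow> (nat \<Rightarrow> real^3) \<Rightarrow> (nat \<Rightarrow> real)
    \<Rightarrow> nat \<Rightarrow> nat \<Rightarrow> real" where
  "bigQ l y x c = (\<lambda>a b.
     let i = a div 4; j = b div 4; p = a mod 4; q = b mod 4;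
         blk = (\<lambda>k. (Qmat (y k) (x k) $ idx4 p $ idx4 q - (c k)^2 * (if p = q then 1 else 0)) / 2)
     in if i = 0 \<and> 1 \<le> j \<and> j \<le> l then blk j
        else if j = 0 \<and> 1 \<le> i \<and> i \<le> l then blk i
        else 0)"

definition bigB :: "nat \<Rightarrow> nat \<Rightarrow> real" where
  "bigB = (\<lambda>a b. if a < 4 \<and> a = b then 1 else 0)"

definition SDR_feasible :: "nat \<Rightarrow> (nat \<Rightarrow> nat \<Rightarrow> real) \<Rightarrow> bool" where
  "SDR_feasible l W \<longleftrightarrow> psd (dimS l) W \<and>
     (\<forall>i\<in>{1..l}. \<forall>p<4. \<forall>q<4. W p (4*i+q) = W (4*i+p) (4*i+q)) \<and>
     (\<Sum>p<4. W p p) = 1"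

definition SDR_obj :: "nat \<Rightarrow> (nat \<Rightarrow> real^3) \<Rightarrow> (nat \<Rightarrow> real^3) \<Rightarrow> (nat \<Rightarrow> real)
    \<Rightarrow> (nat \<Rightarrow> nat \<Rightarrow> real) \<Rightarrow> real" where
  "SDR_obj l y x c W = mtrace (dimS l) (mmult (dimS l) (bigQ l y x c) W) + (\<Sum>i=1..l. (c i)^2)"

definition SDR_val :: "nat \<Rightarrow> (nat \<Rightarrow> real^3) \<Rightarrow> (nat \<Rightarrow> real^3) \<Rightarrow> (nat \<Rightarrow> real) \<Rightarrow> ereal" where
  "SDR_val l y x c = Inf {ereal (SDR_obj l y x c W) | W. SDR_feasible l W}"

definition admissible_dual :: "nat \<Rightarrow> (nat \<Rightarrow> nat \<Rightarrow> real) \<Rightarrow> bool" where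
  "admissible_dual l D \<longleftrightarrow>
     (\<forall>a<dimS l. \<forall>b<dimS l. D a b = D b a) \<and>
     (\<forall>i\<in>{1..l}. \<forall>p<4. \<forall>q<4. D (4*i+p) (4*i+q) + 2 * D p (4*i+q) = 0) \<and>
     (\<forall>a<dimS l. \<forall>b<dimS l.
        \<not> ((a div 4 = b div 4 \<and> 1 \<le> a div 4) \<or> (a div 4 = 0 \<and> 1 \<le> b div 4)
            \<or> (b div 4 = 0 \<and> 1 \<le> a div 4)) \<longrightarrow> D a b = 0)"

definition D_feasible :: "nat \<Rightarrow> (nat \<Rightarrow> real^3) \<Rightarrow> (nat \<Rightarrow> real^3) \<Rightarrow> (nat \<Rightarrow> real)
    \<Rightarrow> real \<Rightarrow> (nat \<Rightarrow> nat \<Rightarrow> real) \<Rightarrow> bool" where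
  "D_feasible l y x c \<mu> D \<longleftrightarrow> admissible_dual l D \<and>
     psd (dimS l) (\<lambda>a b. bigQ l y x c a b - \<mu> * bigB a b - D a b)"

definition D_val :: "nat \<Rightarrow> (nat \<Rightarrow> real^3) \<Rightarrow> (nat \<Rightarrow> real^3) \<Rightarrow> (nat \<Rightarrow> real) \<Rightarrow> ereal" where
  "D_val l y x c = Sup {ereal (\<mu> + (\<Sum>i=1..l. (c i)^2)) | \<mu> D. D_feasible l y x c \<mu> D}"

end

theory Submission
  imports Defs
begin

definition Nq :: "real^3 \<Rightarrow> real^3 \<Rightarrow> real^4^4" where
 "Nq y x = (let y1 = y$1; y2 = y$2; y3 = y$3; x1 = x$1; x2 = x$2; x3 = x$3 in
   vector [
    vector [y1*x1+y2*x2+y3*x3, y3*x2-y2*x3, y1*x3-y3*x1, y2*x1-y1*x2],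
    vector [y3*x2-y2*x3, y1*x1-y2*x2-y3*x3, y1*x2+y2*x1, y1*x3+y3*x1],
    vector [y1*x3-y3*x1, y1*x2+y2*x1, -y1*x1+y2*x2-y3*x3, y2*x3+y3*x2],
    vector [y2*x1-y1*x2, y1*x3+y3*x1, y2*x3+y3*x2, -y1*x1-y2*x2+y3*x3]])"

definition Qex :: "real^3 \<Rightarrow> real^3 \<Rightarrow> real^4^4" where
 "Qex y x = (norm y ^ 2 + norm x ^ 2) *\<^sub>R mat 1 - 2 *\<^sub>R Nq y x"

lemma vec4_1[simp]: "(vector [a,b,c,d] :: 'a::zero^4) $ 1 = a" by (simp add: vector_def)
lemma vec4_2[simp]: "(vector [a,b,c,d] :: 'a::zero^4) $ 2 = b" by (simp add: vector_def)
lemma vec4_3[simp]: "(vector [a,b,c,d] :: 'a::zero^4) $ 3 = c" by (simp add: vector_def)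
lemma vec4_4[simp]: "(vector [a,b,c,d] :: 'a::zero^4) $ 4 = d" by (simp add: vector_def)

lemma Qex_sym: "transpose (Qex y x) = Qex y x"
  unfolding Qex_def Nq_def Let_def
  by (simp add: vec_eq_iff transpose_def forall_4 mat_def)

lemma Qex_form:
  fixes w :: "real^4"
  assumes "norm w = 1"
  shows "w \<bullet> (Qex y x *v w) = (norm (y - rotq w *v x))^2"
proof -
  have s: "w$1^2+w$2^2+w$3^2+w$4^2 = 1"
    using assms by (simp add: norm_eq_1 inner_vec_def sum_4 power2_eq_square)
  show ?thesis
    unfolding Qex_def Nq_def rotq_def Let_def
    apply (simp add: power2_norm_eq_inner inner_vec_def sum_4 sum_3 matrix_vector_mult_def mat_def)
    using s
    by algebra
qed

lemma transpose_diff: "transpose (A - B) = transpose A - transpose (B::'a::ab_group_add^'n^'m)"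
  by (simp add: transpose_def vec_eq_iff)
lemma transpose_add: "transpose (A + B) = transpose A + transpose (B::'a::ab_group_add^'n^'m)"
  by (simp add: transpose_def vec_eq_iff)

lemma if1_mult: "(if P then 1 else 0) * (x::'a::semiring_1) = (if P then x else 0)" by simp
lemma mult_if1: "(x::'a::semiring_1) * (if P then 1 else 0) = (if P then x else 0)" by simp

lemma axis_form: fixes D :: "real^'n^'n"
  shows "axis i 1 \<bullet> (D *v axis j 1) = D$i$j"
  by (simp add: inner_vec_def matrix_vector_mult_def axis_def if1_mult mult_if1 sum.delta)

lemma quad_zero: fixes D :: "real^'n^'n"
  assumes "transpose D = D" "\<And>w. w \<bullet> (D *v w) = 0"
  shows "D = 0"
proof -
  have sym: "D$i$j = D$j$i" for i j using assms(1) by (metis transpose_def vec_lambda_beta)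
  have "D$i$j = 0" for i j
  proof -
    have "(axis i 1 + axis j 1) \<bullet> (D *v (axis i 1 + axis j 1)) = 0" by (rule assms(2))
    then have "D$i$i + D$i$j + D$j$i + D$j$j = 0"
      by (simp add: matrix_vector_right_distrib inner_add_left inner_add_right axis_form)
    moreover have "D$i$i = 0" "D$j$j = 0" using assms(2) axis_form by metis+
    ultimately show ?thesis using sym[of i j] by simp
  qed
  then show ?thesis by (simp add: vec_eq_iff)
qed

lemma form_scale: fixes Q :: "real^4^4"
  assumes "\<And>w. norm w = 1 \<Longrightarrow> w \<bullet> (Q *v w) = f w"
  shows "w \<bullet> (Q *v w) = (norm w)^2 * f (w /\<^sub>R norm w)"
proof (cases "w = 0")
  case True then show ?thesis by simp
next
  case False
  have n: "norm w \<noteq> 0" using False by simp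
  have "(w /\<^sub>R norm w) \<bullet> (Q *v (w /\<^sub>R norm w)) = (w \<bullet> (Q *v w)) / (norm w)^2"
    by (simp add: matrix_vector_mult_scaleR power2_eq_square divide_inverse)
  then have e: "w \<bullet> (Q *v w) = (norm w)^2 * ((w /\<^sub>R norm w) \<bullet> (Q *v (w /\<^sub>R norm w)))"
    using n by (simp add: field_simps)
  have "norm (w /\<^sub>R norm w) = 1" using False by simp
  then have "(w /\<^sub>R norm w) \<bullet> (Q *v (w /\<^sub>R norm w)) = f (w /\<^sub>R norm w)" by (rule assms)
  with e show ?thesis by simp
qed

lemma Qmat_eq: "Qmat y x = Qex y x"
  unfolding Qmat_def
proof (rule the_equality)
  show "transpose (Qex y x) = Qex y x \<and>
    (\<forall>w. norm w = 1 \<longrightarrow> w \<bullet> (Qex y x *v w) = (norm (y - rotq w *v x))\<^sup>2)"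
    using Qex_sym Qex_form by blast
next
  fix Q assume a: "transpose Q = Q \<and> (\<forall>w::real^4. norm w = 1 \<longrightarrow> w \<bullet> (Q *v w) = (norm (y - rotq w *v x))\<^sup>2)"
  let ?D = "Q - Qex y x"
  have "transpose ?D = ?D" using a Qex_sym by (simp add: transpose_diff)
  moreover have "w \<bullet> (?D *v w) = 0" for w
  proof -
    have "w \<bullet> (Q *v w) = (norm w)^2 * (norm (y - rotq (w /\<^sub>R norm w) *v x))\<^sup>2"
      by (rule form_scale) (use a in auto)
    moreover have "w \<bullet> (Qex y x *v w) = (norm w)^2 * (norm (y - rotq (w /\<^sub>R norm w) *v x))\<^sup>2"
      by (rule form_scale) (use Qex_form in auto)
    ultimately show ?thesis by (simp add: matrix_vector_mult_diff_rdistrib inner_diff_right)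
  qed
  ultimately have "?D = 0" by (rule quad_zero)
  then show "Q = Qex y x" by simp
qed

lemma Qmat_sym: "transpose (Qmat y x) = Qmat y x"
  using Qex_sym Qmat_eq by simp

definition psd4 :: "real^4^4 \<Rightarrow> bool" where
  "psd4 A \<longleftrightarrow> transpose A = A \<and> (\<forall>v. 0 \<le> v \<bullet> (A *v v))"

definition tr4 :: "real^4^4 \<Rightarrow> real" where
  "tr4 A = (\<Sum>i\<in>UNIV. A$i$i)"

definition outer :: "real^4 \<Rightarrow> real^4^4" where
  "outer v = (\<chi> i j. v$i * v$j)"

lemma transpose_diff4: "transpose (A - B) = transpose A - transpose (B::'a::ab_group_add^'n^'m)"
  by (simp add: transpose_def vec_eq_iff)
lemma transpose_add4: "transpose (A + B) = transpose A + transpose (B::'a::ab_group_add^'n^'m)"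
  by (simp add: transpose_def vec_eq_iff)
lemma transpose_zero4[simp]: "transpose (0::'a::zero^'n^'m) = 0"
  by (simp add: transpose_def vec_eq_iff)
lemma transpose_sum4: "finite I \<Longrightarrow> transpose (\<Sum>i\<in>I. f i) = (\<Sum>i\<in>I. transpose (f i::real^'n^'m))"
  by (induction I rule: finite_induct) (auto simp: transpose_add4)
lemma transpose_neg4: "transpose (- A) = - transpose (A::'a::ab_group_add^'n^'m)"
  by (simp add: transpose_def vec_eq_iff)

lemma scaleR_mv: "(c *\<^sub>R (A::real^'n^'m)) *v x = c *\<^sub>R (A *v x)"
  by (simp add: matrix_vector_mult_def vec_eq_iff sum_distrib_left mult.assoc)
lemma neg_mv: "(- (A::real^'n^'m)) *v x = - (A *v x)"
  by (simp add: matrix_vector_mult_def vec_eq_iff sum_negf)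
lemma sum_mv: "finite I \<Longrightarrow> (\<Sum>i\<in>I. f i :: real^'n^'m) *v x = (\<Sum>i\<in>I. f i *v x)"
  by (induction I rule: finite_induct) (auto simp: matrix_vector_mult_add_rdistrib)

lemma inner_mat_eq: "(A::real^'n^'m) \<bullet> B = (\<Sum>i\<in>UNIV. \<Sum>j\<in>UNIV. A$i$j * B$i$j)"
  by (simp add: inner_vec_def)

lemma quad_eq: "v \<bullet> ((A::real^'n^'n) *v w) = (\<Sum>i\<in>UNIV. \<Sum>j\<in>UNIV. v$i * A$i$j * w$j)"
  by (simp add: inner_vec_def matrix_vector_mult_def sum_distrib_left mult.assoc)

lemma inner_outer: "A \<bullet> outer v = v \<bullet> (A *v v)"
  unfolding inner_mat_eq quad_eq outer_def
  by (simp add: mult_ac)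

lemma psd4_outer: "psd4 (outer v)"
proof -
  have "w \<bullet> (outer v *v w) = (v \<bullet> w)^2" for w
    unfolding quad_eq outer_def
    by (simp add: power2_eq_square inner_vec_def sum_product mult_ac)
  then show ?thesis unfolding psd4_def by (simp add: outer_def transpose_def vec_eq_iff mult.commute)
qed

lemma psd4_zero: "psd4 0"
  by (simp add: psd4_def transpose_def vec_eq_iff)

lemma psd4_add: "psd4 A \<Longrightarrow> psd4 B \<Longrightarrow> psd4 (A + B)"
  unfolding psd4_def by (simp add: transpose_add4 matrix_vector_mult_add_rdistrib inner_add_right add_nonneg_nonneg)

lemma psd4_scale: "psd4 A \<Longrightarrow> 0 \<le> c \<Longrightarrow> psd4 (c *\<^sub>R A)"
  unfolding psd4_def by (simp add: transpose_scalar scaleR_mv)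

lemma psd4_sum: "finite I \<Longrightarrow> (\<And>i. i \<in> I \<Longrightarrow> psd4 (f i)) \<Longrightarrow> psd4 (\<Sum>i\<in>I. f i)"
  by (induction I rule: finite_induct) (auto simp: psd4_zero psd4_add)

lemma psd4_mat1: "psd4 (mat 1)"
  unfolding psd4_def by simp

lemma axis_form4: fixes D :: "real^'n^'n"
  shows "axis i 1 \<bullet> (D *v axis j 1) = D$i$j"
proof -
  have a: "(if P then 1 else 0) * (x::real) = (if P then x else 0)" for P x by simp
  have b: "(x::real) * (if P then 1 else 0) = (if P then x else 0)" for P x by simp
  show ?thesis by (simp add: inner_vec_def matrix_vector_mult_def axis_def a b)
qed

lemma form2: fixes A :: "real^'n^'n"
  shows "(axis i 1 + s *\<^sub>R axis j 1) \<bullet> (A *v (axis i 1 + s *\<^sub>R axis j 1)) =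
     A$i$i + s * A$i$j + s * A$j$i + s^2 * A$j$j"
  by (simp only: matrix_vector_right_distrib inner_add_left inner_add_right
      matrix_vector_mult_scaleR inner_scaleR_left inner_scaleR_right axis_form4 power2_eq_square)
     (simp add: algebra_simps)

lemma psd4_form: "psd4 A \<Longrightarrow> 0 \<le> v \<bullet> (A *v v)"
  by (simp add: psd4_def)

lemma psd4_diag: "psd4 A \<Longrightarrow> 0 \<le> A$i$i"
  using psd4_form[of A "axis i 1"] by (simp only: axis_form4)

lemma sym_entry: "transpose A = A \<Longrightarrow> A$j$i = A$i$j"
proof -
  assume "transpose A = A"
  then have "transpose A $ i $ j = A $ i $ j" by simp
  then show ?thesis by (simp add: transpose_def)
qed

lemma psd4_sym: "psd4 A \<Longrightarrow> A$j$i = A$i$j"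
  unfolding psd4_def using sym_entry by blast

lemma psd4_offdiag: assumes "psd4 A" shows "2 * \<bar>A$i$j\<bar> \<le> A$i$i + A$j$j"
proof -
  have s: "A$j$i = A$i$j" using psd4_sym[OF assms] .
  have "0 \<le> A$i$i + 1 * A$i$j + 1 * A$j$i + 1^2 * A$j$j"
    using psd4_form[OF assms, of "axis i 1 + 1 *\<^sub>R axis j 1"] by (simp only: form2)
  moreover have "0 \<le> A$i$i + (-1) * A$i$j + (-1) * A$j$i + (-1)^2 * A$j$j"
    using psd4_form[OF assms, of "axis i 1 + (-1) *\<^sub>R axis j 1"] by (simp only: form2)
  ultimately show ?thesis using s by (simp add: abs_if)
qed

lemma psd4_tr: "psd4 A \<Longrightarrow> 0 \<le> tr4 A"
  unfolding tr4_def by (simp add: psd4_diag sum_nonneg)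

lemma psd4_tr0: assumes "psd4 A" "tr4 A = 0" shows "A = 0"
proof -
  have d: "A$i$i = 0" for i
  proof -
    have "(\<Sum>k\<in>UNIV. A$k$k) = 0" using assms(2) unfolding tr4_def .
    then have "\<forall>k\<in>UNIV. A$k$k = 0"
      by (subst sum_nonneg_eq_0_iff[symmetric]) (auto simp: psd4_diag[OF assms(1)])
    then show ?thesis by simp
  qed
  have "A$i$j = 0" for i j
    using psd4_offdiag[OF assms(1), of i j] d by simp
  then show ?thesis by (simp add: vec_eq_iff)
qed

lemma psd4_trpos: "psd4 A \<Longrightarrow> A \<noteq> 0 \<Longrightarrow> 0 < tr4 A"
  using psd4_tr psd4_tr0 by force

lemma inner_mat1: "A \<bullet> mat 1 = tr4 (A::real^4^4)"
proof -
  have a: "(x::real) * (if P then 1 else 0) = (if P then x else 0)" for P x by simp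
  show ?thesis unfolding inner_mat_eq tr4_def by (simp add: mat_def a)
qed

lemma dual_psd4: assumes "transpose M = M" "\<And>X. psd4 X \<Longrightarrow> 0 \<le> M \<bullet> X"
  shows "psd4 M"
  unfolding psd4_def using assms(1) assms(2)[OF psd4_outer] by (simp add: inner_outer)

lemma inner_transpose4: "transpose A \<bullet> B = (A::real^'n^'n) \<bullet> transpose B"
  unfolding inner_mat_eq transpose_def by simp (rule sum.swap)

lemma sym_from_orth: fixes G :: "real^'n^'n"
  assumes "\<And>A. transpose A = - A \<Longrightarrow> G \<bullet> A = 0"
  shows "transpose G = G"
proof -
  let ?A = "G - transpose G"
  have t: "transpose ?A = - ?A" by (simp add: transpose_diff4)
  have 1: "G \<bullet> ?A = 0" using assms t by blast
  have "transpose G \<bullet> ?A = G \<bullet> transpose ?A" by (rule inner_transpose4)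
  also have "\<dots> = - (G \<bullet> ?A)" using t by (simp add: inner_diff_right)
  also have "\<dots> = 0" using 1 by simp
  finally have "?A \<bullet> ?A = 0" using 1 by (simp add: inner_diff_left)
  then show ?thesis by simp
qed

lemma lin_nonneg: fixes a b c :: real
  assumes "\<And>s. 0 \<le> s \<Longrightarrow> a - s * c \<le> b" shows "0 \<le> c"
proof (rule ccontr)
  assume "\<not> 0 \<le> c"
  then have c: "c < 0" by simp
  define s where "s = (\<bar>a\<bar> + \<bar>b\<bar> + 1) / (- c)"
  have "0 \<le> s" unfolding s_def by (rule divide_nonneg_pos) (use c in auto)
  have "s * c = - (\<bar>a\<bar> + \<bar>b\<bar> + 1)" using c by (simp add: s_def)
  then have "a - s * c > b" by linarith
  with assms[OF \<open>0 \<le> s\<close>] show False by simp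
qed

lemma lin_zero: fixes a b c :: real
  assumes "\<And>s. b \<le> a + s * c" shows "c = 0"
proof -
  have "0 \<le> c"
  proof (rule lin_nonneg[of "-a" _ "-b"])
    fix s :: real assume "0 \<le> s"
    show "- a - s * c \<le> - b" using assms[of s] by linarith
  qed
  moreover have "0 \<le> -c"
  proof (rule lin_nonneg[of "-a" _ "-b"])
    fix s :: real assume "0 \<le> s"
    show "- a - s * (-c) \<le> - b" using assms[of "-s"] by linarith
  qed
  ultimately show ?thesis by simp
qed

lemma tr4_scale: "tr4 (c *\<^sub>R A) = c * tr4 A"
  by (simp add: tr4_def sum_distrib_left)
lemma tr4_neg: "tr4 (- A) = - tr4 A"
  by (simp add: tr4_def sum_negf)

lemma psd4_shift:
  assumes "transpose P = P"
  shows "psd4 (P + (\<Sum>i\<in>UNIV. \<Sum>j\<in>UNIV. \<bar>P$i$j\<bar>) *\<^sub>R mat 1)"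
proof -
  let ?g = "(\<Sum>i\<in>UNIV. \<Sum>j\<in>UNIV. \<bar>P$i$j\<bar>)"
  have "0 \<le> v \<bullet> ((P + ?g *\<^sub>R mat 1) *v v)" for v :: "real^4"
  proof -
    have t: "- (\<bar>P$i$j\<bar> * (v \<bullet> v)) \<le> v$i * P$i$j * v$j" for i j
    proof -
      have "\<bar>v$i\<bar> * \<bar>v$j\<bar> \<le> norm v * norm v"
        by (intro mult_mono component_le_norm_cart) auto
      then have "\<bar>v$i\<bar> * \<bar>v$j\<bar> \<le> v \<bullet> v" by (simp add: power2_norm_eq_inner[symmetric] power2_eq_square)
      then have "\<bar>P$i$j\<bar> * (\<bar>v$i\<bar> * \<bar>v$j\<bar>) \<le> \<bar>P$i$j\<bar> * (v \<bullet> v)"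
        by (intro mult_left_mono) auto
      moreover have "\<bar>v$i * P$i$j * v$j\<bar> = \<bar>P$i$j\<bar> * (\<bar>v$i\<bar> * \<bar>v$j\<bar>)"
        by (simp add: abs_mult)
      ultimately show ?thesis by linarith
    qed
    have "(\<Sum>i\<in>UNIV. \<Sum>j\<in>UNIV. - (\<bar>P$i$j\<bar> * (v \<bullet> v))) \<le> (\<Sum>i\<in>UNIV. \<Sum>j\<in>UNIV. v$i * P$i$j * v$j)"
      by (intro sum_mono t)
    then have "- (?g * (v \<bullet> v)) \<le> v \<bullet> (P *v v)"
      by (simp add: quad_eq sum_negf sum_distrib_right)
    then show ?thesis
      by (simp add: matrix_vector_mult_add_rdistrib scaleR_mv inner_add_right)
  qed
  moreover have "transpose (P + ?g *\<^sub>R mat 1) = P + ?g *\<^sub>R mat 1"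
    using assms by (simp add: transpose_add4 transpose_scalar)
  ultimately show ?thesis unfolding psd4_def by blast
qed

lemma psd4_bound:
  assumes "psd4 X" "psd4 (W - X)"
  shows "- (\<Sum>i\<in>UNIV. \<Sum>j\<in>UNIV. \<bar>P$i$j\<bar> * (W$i$i + W$j$j)) \<le> P \<bullet> X"
proof -
  have t: "- (\<bar>P$i$j\<bar> * (W$i$i + W$j$j)) \<le> P$i$j * X$i$j" for i j
  proof -
    have "2 * \<bar>X$i$j\<bar> \<le> X$i$i + X$j$j" by (rule psd4_offdiag[OF assms(1)])
    moreover have "0 \<le> (W - X)$i$i" "0 \<le> (W - X)$j$j" using psd4_diag[OF assms(2)] by auto
    moreover have "0 \<le> X$i$i" "0 \<le> X$j$j" using psd4_diag[OF assms(1)] by auto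
    ultimately have "\<bar>X$i$j\<bar> \<le> W$i$i + W$j$j" by simp
    then have "\<bar>P$i$j\<bar> * \<bar>X$i$j\<bar> \<le> \<bar>P$i$j\<bar> * (W$i$i + W$j$j)"
      by (intro mult_left_mono) auto
    moreover have "\<bar>P$i$j * X$i$j\<bar> = \<bar>P$i$j\<bar> * \<bar>X$i$j\<bar>" by (simp add: abs_mult)
    ultimately show ?thesis by linarith
  qed
  have "(\<Sum>i\<in>UNIV. \<Sum>j\<in>UNIV. - (\<bar>P$i$j\<bar> * (W$i$i + W$j$j))) \<le> (\<Sum>i\<in>UNIV. \<Sum>j\<in>UNIV. P$i$j * X$i$j)"
    by (intro sum_mono t)
  then show ?thesis by (simp add: inner_mat_eq sum_negf)
qed

lemma psd4_W: "psd4 (W - \<delta> *\<^sub>R mat 1) \<Longrightarrow> 0 \<le> \<delta> \<Longrightarrow> psd4 W"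
  using psd4_add[of "W - \<delta> *\<^sub>R mat 1" "\<delta> *\<^sub>R mat 1"] psd4_scale[OF psd4_mat1] by simp

lemma antisym_zero: fixes A :: "real^'n^'n"
  assumes "transpose A = - A" "transpose A = A" shows "A = 0"
proof -
  have "A = - A" using assms by simp
  then show ?thesis by (simp add: vec_eq_iff)
qed

lemma perblock:
  fixes W P :: "real^4^4" and \<delta> \<eta> :: real
  assumes Wd: "psd4 (W - \<delta> *\<^sub>R mat 1)" and dpos: "\<delta> > 0" and Psym: "transpose P = P" and eta: "\<eta> > 0"
  shows "\<exists>\<Gamma> X. psd4 \<Gamma> \<and> psd4 (P + \<Gamma>) \<and> psd4 X \<and> psd4 (W - X) \<and> P \<bullet> X \<le> - (W \<bullet> \<Gamma>) + \<eta>"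
proof -
  have W: "psd4 W" using psd4_W Wd dpos by simp
  define F where "F = {P \<bullet> X | X. psd4 X \<and> psd4 (W - X)}"
  have Fne: "F \<noteq> {}" unfolding F_def using W psd4_zero by force
  have Fbdd: "bdd_below F" unfolding F_def
    by (rule bdd_belowI[of _ "- (\<Sum>i\<in>UNIV. \<Sum>j\<in>UNIV. \<bar>P$i$j\<bar> * (W$i$i + W$j$j))"]) (auto intro: psd4_bound)
  define m where "m = Inf F"
  have mle: "m \<le> P \<bullet> X" if "psd4 X" "psd4 (W - X)" for X
    unfolding m_def by (rule cInf_lower[OF _ Fbdd]) (use that F_def in auto)
  obtain X0 where X0: "psd4 X0" "psd4 (W - X0)" "P \<bullet> X0 < m + \<eta>/2"
  proof -
    have "Inf F < m + \<eta>/2" using eta m_def by simp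
    then obtain z where "z \<in> F" "z < m + \<eta>/2" using cInf_lessD[OF Fne] by blast
    then show ?thesis using that F_def by auto
  qed
  define S where "S = {(W - X - Z + A, P \<bullet> X + r) | X Z A r. psd4 X \<and> psd4 Z \<and> transpose A = - A \<and> 0 \<le> r}"
  define T where "T = {0::real^4^4} \<times> {.. m - \<eta>/2}"
  have convS: "convex S" unfolding convex_def
  proof (intro ballI allI impI)
    fix x y and u v :: real
    assume "x \<in> S" "y \<in> S" and uv: "0 \<le> u" "0 \<le> v" "u + v = 1"
    then obtain X1 Z1 A1 r1 X2 Z2 A2 r2 where
      x: "x = (W - X1 - Z1 + A1, P \<bullet> X1 + r1)" "psd4 X1" "psd4 Z1" "transpose A1 = - A1" "0 \<le> r1" and
      y: "y = (W - X2 - Z2 + A2, P \<bullet> X2 + r2)" "psd4 X2" "psd4 Z2" "transpose A2 = - A2" "0 \<le> r2"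
      unfolding S_def by blast
    have v: "v = 1 - u" using uv by simp
    have f: "u *\<^sub>R (W - X1 - Z1 + A1) + v *\<^sub>R (W - X2 - Z2 + A2) =
       W - (u *\<^sub>R X1 + v *\<^sub>R X2) - (u *\<^sub>R Z1 + v *\<^sub>R Z2) + (u *\<^sub>R A1 + v *\<^sub>R A2)"
      unfolding v by (simp add: algebra_simps)
    have g: "u * (P \<bullet> X1 + r1) + v * (P \<bullet> X2 + r2) = P \<bullet> (u *\<^sub>R X1 + v *\<^sub>R X2) + (u * r1 + v * r2)"
      by (simp add: inner_add_right distrib_left)
    have "u *\<^sub>R x + v *\<^sub>R y = (W - (u *\<^sub>R X1 + v *\<^sub>R X2) - (u *\<^sub>R Z1 + v *\<^sub>R Z2) + (u *\<^sub>R A1 + v *\<^sub>R A2),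
        P \<bullet> (u *\<^sub>R X1 + v *\<^sub>R X2) + (u * r1 + v * r2))"
      unfolding x(1) y(1) using f g by simp
    moreover have "psd4 (u *\<^sub>R X1 + v *\<^sub>R X2)" "psd4 (u *\<^sub>R Z1 + v *\<^sub>R Z2)"
      using x y uv by (auto intro!: psd4_add psd4_scale)
    moreover have "transpose (u *\<^sub>R A1 + v *\<^sub>R A2) = - (u *\<^sub>R A1 + v *\<^sub>R A2)"
      using x y by (simp add: transpose_add4 transpose_scalar)
    moreover have "0 \<le> u * r1 + v * r2" using x y uv by simp
    ultimately show "u *\<^sub>R x + v *\<^sub>R y \<in> S" unfolding S_def by blast
  qed
  have convT: "convex T" unfolding T_def by (intro convex_Times convex_singleton convex_real_interval)
  have Sne: "S \<noteq> {}"
  proof -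
    have "transpose (0::real^4^4) = - 0" by simp
    then have "(W - 0 - 0 + 0, P \<bullet> 0 + 0) \<in> S" unfolding S_def using psd4_zero by blast
    then show ?thesis by blast
  qed
  have Tne: "T \<noteq> {}" unfolding T_def by auto
  have disj: "T \<inter> S = {}"
  proof (rule ccontr)
    assume "T \<inter> S \<noteq> {}"
    then obtain s X Z A r where e: "(0::real^4^4, s) = (W - X - Z + A, P \<bullet> X + r)" "s \<le> m - \<eta>/2"
      "psd4 X" "psd4 Z" "transpose A = - A" "0 \<le> r"
      unfolding S_def T_def by blast
    have h: "(W - X - Z) + A = 0" using e(1) by simp
    have A: "A = - (W - X - Z)" using minus_unique[OF h] by simp
    have "transpose A = A" unfolding A using W e(3,4) unfolding psd4_def
      by (simp add: transpose_neg4 transpose_diff4)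
    then have "A = 0" using antisym_zero e(5) by blast
    then have "W - X = Z" using A by (simp add: algebra_simps)
    then have "m \<le> P \<bullet> X" using mle e(3,4) by simp
    then show False using e eta by simp
  qed
  obtain a b where ab: "a \<noteq> 0" "\<forall>x\<in>T. a \<bullet> x \<le> b" "\<forall>x\<in>S. b \<le> a \<bullet> x"
    using separating_hyperplane_sets[OF convT convS Tne Sne disj] by blast
  obtain G g where a: "a = (G, g)" by (cases a)
  have memS: "b \<le> G \<bullet> (W - X - Z + A) + g * (P \<bullet> X + r)"
    if "psd4 X" "psd4 Z" "transpose A = - A" "0 \<le> r" for X Z A r
    using ab(3) that unfolding S_def a by fastforce
  have memT: "g * s \<le> b" if "s \<le> m - \<eta>/2" for s
    using ab(2) that unfolding T_def a by fastforce
  have Gsym: "transpose G = G"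
  proof (rule sym_from_orth)
    fix A :: "real^4^4" assume A: "transpose A = - A"
    have "b \<le> G \<bullet> W + s * (G \<bullet> A)" for s
    proof -
      have "transpose (s *\<^sub>R A) = - (s *\<^sub>R A)" using A by (simp add: transpose_scalar)
      from memS[OF psd4_zero psd4_zero this order_refl] show ?thesis
        by (simp add: inner_add_right)
    qed
    then show "G \<bullet> A = 0" by (rule lin_zero)
  qed
  have gpos: "0 \<le> g"
  proof (rule lin_nonneg[of "g * (m - \<eta>/2)" _ b])
    fix s :: real assume "0 \<le> s"
    have "g * (m - \<eta>/2 - s) \<le> b" by (rule memT) (use \<open>0 \<le> s\<close> in simp)
    then show "g * (m - \<eta> / 2) - s * g \<le> b" by (simp add: algebra_simps)
  qed
  have GZ: "G \<bullet> Z \<le> 0" if Z: "psd4 Z" for Z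
  proof -
    have "0 \<le> - (G \<bullet> Z)"
    proof (rule lin_nonneg[of "- (G \<bullet> W)" _ "-b"])
      fix s :: real assume s: "0 \<le> s"
      have "transpose (0::real^4^4) = - 0" by simp
      from memS[OF psd4_zero psd4_scale[OF Z s] this order_refl]
      show "- (G \<bullet> W) - s * - (G \<bullet> Z) \<le> - b" by (simp add: inner_diff_right)
    qed
    then show ?thesis by simp
  qed
  have GX: "0 \<le> (g *\<^sub>R P - G) \<bullet> X" if X: "psd4 X" for X
  proof (rule lin_nonneg[of "- (G \<bullet> W)" _ "-b"])
    fix s :: real assume s: "0 \<le> s"
    have "transpose (0::real^4^4) = - 0" by simp
    from memS[OF psd4_scale[OF X s] psd4_zero this order_refl]
    show "- (G \<bullet> W) - s * ((g *\<^sub>R P - G) \<bullet> X) \<le> - b"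
      by (simp add: inner_diff_right inner_diff_left algebra_simps)
  qed
  have bGW: "b \<le> G \<bullet> W"
  proof -
    have "transpose (0::real^4^4) = - 0" by simp
    from memS[OF psd4_zero psd4_zero this order_refl] show ?thesis by simp
  qed
  have gmb: "g * (m - \<eta>/2) \<le> b" by (rule memT) simp
  have negG: "psd4 (- G)"
    by (rule dual_psd4) (use Gsym GZ in \<open>auto simp: transpose_neg4\<close>)
  show ?thesis
  proof (cases "g = 0")
    case True
    have "0 \<le> G \<bullet> W" using bGW gmb True by simp
    moreover have "G \<bullet> W = G \<bullet> (W - \<delta> *\<^sub>R mat 1) + \<delta> * tr4 G"
      by (simp add: inner_diff_right inner_mat1)
    moreover have "G \<bullet> (W - \<delta> *\<^sub>R mat 1) \<le> 0" by (rule GZ[OF Wd])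
    ultimately have "0 \<le> \<delta> * tr4 G" by linarith
    then have "0 \<le> tr4 G" using dpos by (simp add: zero_le_mult_iff)
    moreover have "0 \<le> tr4 (- G)" by (rule psd4_tr[OF negG])
    ultimately have "tr4 (- G) = 0" by (simp add: tr4_neg)
    then have "- G = 0" by (rule psd4_tr0[OF negG])
    then have "a = 0" using a True by (simp add: zero_prod_def)
    then show ?thesis using ab(1) by simp
  next
    case False
    then have gp: "0 < g" using gpos by simp
    define \<Gamma> where "\<Gamma> = (1/g) *\<^sub>R (- G)"
    have 1: "psd4 \<Gamma>" unfolding \<Gamma>_def by (rule psd4_scale[OF negG]) (use gp in simp)
    have "psd4 (g *\<^sub>R P - G)"
      by (rule dual_psd4) (use Gsym Psym GX in \<open>auto simp: transpose_diff4 transpose_scalar\<close>)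
    then have "psd4 ((1/g) *\<^sub>R (g *\<^sub>R P - G))" by (rule psd4_scale) (use gp in simp)
    moreover have "(1/g) *\<^sub>R (g *\<^sub>R P - G) = P + \<Gamma>" unfolding \<Gamma>_def using gp
      by (simp add: algebra_simps)
    ultimately have 2: "psd4 (P + \<Gamma>)" by simp
    have "W \<bullet> \<Gamma> = - (G \<bullet> W) / g" unfolding \<Gamma>_def by (simp add: inner_commute)
    then have "- (W \<bullet> \<Gamma>) = (G \<bullet> W) / g" by simp
    moreover have "m - \<eta>/2 \<le> (G \<bullet> W) / g" using gmb bGW gp by (simp add: field_simps)
    ultimately have "P \<bullet> X0 \<le> - (W \<bullet> \<Gamma>) + \<eta>" using X0(3) by linarith
    then show ?thesis using 1 2 X0 by blast
  qed
qed

definition gshift :: "real^4^4 \<Rightarrow> real" where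
  "gshift P = (\<Sum>i\<in>UNIV. \<Sum>j\<in>UNIV. \<bar>P$i$j\<bar>)"

lemma gshift_nonneg: "0 \<le> gshift P"
  unfolding gshift_def by (intro sum_nonneg) auto

lemma outer_sep:
  fixes Pf :: "nat \<Rightarrow> real^4^4" and I :: "nat set" and t :: real
  assumes fin: "finite I" and Psym: "\<And>i. i \<in> I \<Longrightarrow> transpose (Pf i) = Pf i"
  shows "(\<exists>\<Gamma>. (\<forall>i\<in>I. psd4 (\<Gamma> i) \<and> psd4 (Pf i + \<Gamma> i)) \<and> psd4 (t *\<^sub>R mat 1 - (\<Sum>i\<in>I. \<Gamma> i)))
    \<or> (\<exists>W0. psd4 W0 \<and> tr4 W0 = 1 \<and>
         (\<forall>\<Gamma>. (\<forall>i\<in>I. psd4 (\<Gamma> i) \<and> psd4 (Pf i + \<Gamma> i)) \<longrightarrow> t \<le> W0 \<bullet> (\<Sum>i\<in>I. \<Gamma> i)))"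
proof -
  define feas where "feas \<Gamma> \<longleftrightarrow> (\<forall>i\<in>I. psd4 (\<Gamma> i) \<and> psd4 (Pf i + \<Gamma> i))" for \<Gamma>
  define \<Gamma>0 where "\<Gamma>0 i = gshift (Pf i) *\<^sub>R (mat 1 :: real^4^4)" for i
  have f0: "feas \<Gamma>0" unfolding feas_def \<Gamma>0_def
    using psd4_shift[OF Psym] psd4_scale[OF psd4_mat1 gshift_nonneg] unfolding gshift_def by blast
  define S where "S = {(\<Sum>i\<in>I. \<Gamma> i) + Z + A | \<Gamma> Z A. feas \<Gamma> \<and> psd4 Z \<and> transpose A = - A}"
  define T where "T = {t *\<^sub>R mat 1 - Z | Z. psd4 Z}"
  have convS: "convex S" unfolding convex_def
  proof (intro ballI allI impI)
    fix x y and u v :: real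
    assume "x \<in> S" "y \<in> S" and uv: "0 \<le> u" "0 \<le> v" "u + v = 1"
    then obtain G1 Z1 A1 G2 Z2 A2 where
      x: "x = (\<Sum>i\<in>I. G1 i) + Z1 + A1" "feas G1" "psd4 Z1" "transpose A1 = - A1" and
      y: "y = (\<Sum>i\<in>I. G2 i) + Z2 + A2" "feas G2" "psd4 Z2" "transpose A2 = - A2"
      unfolding S_def by blast
    define G where "G i = u *\<^sub>R G1 i + v *\<^sub>R G2 i" for i
    have "u *\<^sub>R x + v *\<^sub>R y = (\<Sum>i\<in>I. G i) + (u *\<^sub>R Z1 + v *\<^sub>R Z2) + (u *\<^sub>R A1 + v *\<^sub>R A2)"
      unfolding x(1) y(1) G_def by (simp add: sum.distrib scaleR_sum_right algebra_simps)
    moreover have "feas G" unfolding feas_def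
    proof
      fix i assume i: "i \<in> I"
      have "psd4 (G1 i)" "psd4 (Pf i + G1 i)" "psd4 (G2 i)" "psd4 (Pf i + G2 i)"
        using x(2) y(2) i unfolding feas_def by auto
      moreover have "Pf i + G i = u *\<^sub>R (Pf i + G1 i) + v *\<^sub>R (Pf i + G2 i)"
        unfolding G_def using uv(3) by (simp add: algebra_simps flip: scaleR_add_left)
      ultimately show "psd4 (G i) \<and> psd4 (Pf i + G i)"
        unfolding G_def using uv by (auto intro!: psd4_add psd4_scale)
    qed
    moreover have "psd4 (u *\<^sub>R Z1 + v *\<^sub>R Z2)"
      using x y uv by (auto intro!: psd4_add psd4_scale)
    moreover have "transpose (u *\<^sub>R A1 + v *\<^sub>R A2) = - (u *\<^sub>R A1 + v *\<^sub>R A2)"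
      using x y by (simp add: transpose_add4 transpose_scalar)
    ultimately show "u *\<^sub>R x + v *\<^sub>R y \<in> S" unfolding S_def by blast
  qed
  have convT: "convex T" unfolding convex_def
  proof (intro ballI allI impI)
    fix x y and u v :: real
    assume "x \<in> T" "y \<in> T" and uv: "0 \<le> u" "0 \<le> v" "u + v = 1"
    then obtain Z1 Z2 where x: "x = t *\<^sub>R mat 1 - Z1" "psd4 Z1" and y: "y = t *\<^sub>R mat 1 - Z2" "psd4 Z2"
      unfolding T_def by blast
    have v: "v = 1 - u" using uv by simp
    have "u *\<^sub>R x + v *\<^sub>R y = t *\<^sub>R mat 1 - (u *\<^sub>R Z1 + v *\<^sub>R Z2)"
      unfolding x(1) y(1) v by (simp add: algebra_simps)
    moreover have "psd4 (u *\<^sub>R Z1 + v *\<^sub>R Z2)" using x y uv by (auto intro!: psd4_add psd4_scale)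
    ultimately show "u *\<^sub>R x + v *\<^sub>R y \<in> T" unfolding T_def by blast
  qed
  have z: "transpose (0::real^4^4) = - 0" by simp
  have Sne: "S \<noteq> {}"
  proof -
    have "(\<Sum>i\<in>I. \<Gamma>0 i) + 0 + 0 \<in> S" unfolding S_def using f0 psd4_zero z by blast
    then show ?thesis by blast
  qed
  have Tne: "T \<noteq> {}"
  proof -
    have "t *\<^sub>R mat 1 - 0 \<in> T" unfolding T_def using psd4_zero by blast
    then show ?thesis by blast
  qed
  show ?thesis
  proof (cases "T \<inter> S = {}")
    case False
    then obtain xx where xx: "xx \<in> T" "xx \<in> S" by blast
    obtain Z' where z1: "xx = t *\<^sub>R mat 1 - Z'" "psd4 Z'" using xx(1) unfolding T_def by blast
    obtain G Z A where z2: "xx = (\<Sum>i\<in>I. G i) + Z + A" "feas G" "psd4 Z" "transpose A = - A"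
      using xx(2) unfolding S_def by blast
    have e: "(\<Sum>i\<in>I. G i) + Z + A = t *\<^sub>R mat 1 - Z'" "feas G" "psd4 Z"
      "transpose A = - A" "psd4 Z'" using z1 z2 by auto
    have A: "A = t *\<^sub>R mat 1 - Z' - (\<Sum>i\<in>I. G i) - Z" using e(1) by (simp add: algebra_simps)
    have "transpose (\<Sum>i\<in>I. G i) = (\<Sum>i\<in>I. G i)"
      using e(2) fin unfolding feas_def psd4_def by (simp add: transpose_sum4)
    then have "transpose A = A" unfolding A using e(3,5) unfolding psd4_def
      by (simp add: transpose_diff4 transpose_scalar)
    then have "A = 0" using antisym_zero e(4) by blast
    then have "t *\<^sub>R mat 1 - (\<Sum>i\<in>I. G i) = Z + Z'" using A by (simp add: algebra_simps)
    then have "psd4 (t *\<^sub>R mat 1 - (\<Sum>i\<in>I. G i))" using psd4_add[OF e(3) e(5)] by simp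
    then show ?thesis using e(2) unfolding feas_def by blast
  next
    case True
    obtain H b where ab: "H \<noteq> 0" "\<forall>x\<in>T. H \<bullet> x \<le> b" "\<forall>x\<in>S. b \<le> H \<bullet> x"
      using separating_hyperplane_sets[OF convT convS Tne Sne True] by blast
    have memS: "b \<le> H \<bullet> ((\<Sum>i\<in>I. G i) + Z + A)" if "feas G" "psd4 Z" "transpose A = - A" for G Z A
      using ab(3) that unfolding S_def by blast
    have memT: "H \<bullet> (t *\<^sub>R mat 1 - Z) \<le> b" if "psd4 Z" for Z
      using ab(2) that unfolding T_def by blast
    have Hsym: "transpose H = H"
    proof (rule sym_from_orth)
      fix A :: "real^4^4" assume A: "transpose A = - A"
      have "b \<le> H \<bullet> (\<Sum>i\<in>I. \<Gamma>0 i) + s * (H \<bullet> A)" for s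
      proof -
        have "transpose (s *\<^sub>R A) = - (s *\<^sub>R A)" using A by (simp add: transpose_scalar)
        from memS[OF f0 psd4_zero this] show ?thesis by (simp add: inner_add_right)
      qed
      then show "H \<bullet> A = 0" by (rule lin_zero)
    qed
    have Hpsd: "psd4 H"
    proof (rule dual_psd4[OF Hsym])
      fix Z :: "real^4^4" assume Z: "psd4 Z"
      show "0 \<le> H \<bullet> Z"
      proof (rule lin_nonneg[of "H \<bullet> (t *\<^sub>R mat 1)" _ b])
        fix s :: real assume s: "0 \<le> s"
        from memT[OF psd4_scale[OF Z s]] show "H \<bullet> (t *\<^sub>R mat 1) - s * (H \<bullet> Z) \<le> b"
          by (simp add: inner_diff_right)
      qed
    qed
    have trH: "0 < tr4 H" by (rule psd4_trpos[OF Hpsd ab(1)])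
    have tb: "t * tr4 H \<le> b" using memT[OF psd4_zero] by (simp add: inner_mat1)
    define W0 where "W0 = (1 / tr4 H) *\<^sub>R H"
    have "psd4 W0" unfolding W0_def by (rule psd4_scale[OF Hpsd]) (use trH in simp)
    moreover have "tr4 W0 = 1" unfolding W0_def tr4_scale using trH by simp
    moreover have "t \<le> W0 \<bullet> (\<Sum>i\<in>I. G i)" if "feas G" for G
    proof -
      have "b \<le> H \<bullet> (\<Sum>i\<in>I. G i)" using memS[OF that psd4_zero z] by simp
      then have "t * tr4 H \<le> H \<bullet> (\<Sum>i\<in>I. G i)" using tb by linarith
      then show ?thesis unfolding W0_def using trH by (simp add: field_simps)
    qed
    ultimately show ?thesis unfolding feas_def by blast
  qed
qed

definition dec4 :: "4 \<Rightarrow> nat" where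
  "dec4 k = (if k = 1 then 0 else if k = 2 then 1 else if k = 3 then 2 else 3)"

lemma idx4_vals: "idx4 0 = 1" "idx4 1 = 2" "idx4 2 = 3" "idx4 3 = 4" "idx4 (Suc 0) = 2"
  by (simp_all add: idx4_def)

lemma four_distinct: "(1::4) \<noteq> 2" "(1::4) \<noteq> 3" "(1::4) \<noteq> 4" "(2::4) \<noteq> 3" "(2::4) \<noteq> 4" "(3::4) \<noteq> 4"
  by simp_all

lemma dec4_lt: "dec4 k < 4"
  by (simp add: dec4_def)

lemma idx4_dec4[simp]: "idx4 (dec4 k) = k"
  using exhaust_4[of k] by (auto simp: dec4_def idx4_vals)

lemma dec4_idx4[simp]: "p < 4 \<Longrightarrow> dec4 (idx4 p) = p"
proof -
  assume "p < 4"
  then have "p = 0 \<or> p = 1 \<or> p = 2 \<or> p = 3" by auto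
  then show ?thesis by (auto simp: dec4_def idx4_vals)
qed

lemma idx4_inj: "p < 4 \<Longrightarrow> q < 4 \<Longrightarrow> idx4 p = idx4 q \<longleftrightarrow> p = q"
  by (metis dec4_idx4)

lemma sum4_idx: "(\<Sum>p<4. f (idx4 p)) = (\<Sum>k\<in>UNIV. f k)"
proof -
  have "(\<Sum>p<4. f (idx4 p)) = f (idx4 0) + f (idx4 1) + f (idx4 2) + f (idx4 3)"
    by (simp add: numeral_eq_Suc lessThan_Suc add_ac)
  then show ?thesis by (simp add: sum_4 idx4_vals)
qed

lemma dec4_mod[simp]: "dec4 k mod 4 = dec4 k"
  using dec4_lt[of k] by simp
lemma dec4_div[simp]: "dec4 k div 4 = 0"
  using dec4_lt[of k] by simp

lemma div4[simp]: "(4 * i + dec4 k) div 4 = i"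
  using dec4_lt[of k] by simp
lemma mod4[simp]: "(4 * i + dec4 k) mod 4 = dec4 k"
  using dec4_lt[of k] by simp

lemma sum_blocks: "(\<Sum>a<4*m. f a) = (\<Sum>i<m. \<Sum>p<4. f (4*i+p :: nat))"
proof (induction m)
  case 0 then show ?case by simp
next
  case (Suc m)
  have e: "4 * Suc m = Suc (Suc (Suc (Suc (4*m))))" by simp
  have "(\<Sum>a<4*Suc m. f a) = (\<Sum>a<4*m. f a) + (f (4*m) + f (Suc (4*m)) + f (Suc (Suc (4*m))) + f (Suc (Suc (Suc (4*m)))))"
    unfolding e by (simp only: sum.lessThan_Suc add.assoc)
  moreover have "(\<Sum>p<4. f (4*m+p)) = f (4*m) + f (Suc (4*m)) + f (Suc (Suc (4*m))) + f (Suc (Suc (Suc (4*m))))"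
    by (simp add: numeral_eq_Suc lessThan_Suc add_ac)
  ultimately show ?case using Suc by simp
qed

definition vb :: "(nat \<Rightarrow> real) \<Rightarrow> nat \<Rightarrow> real^4" where
  "vb v i = (\<chi> k. v (4*i + dec4 k))"

definition mb :: "(nat \<Rightarrow> nat \<Rightarrow> real) \<Rightarrow> nat \<Rightarrow> nat \<Rightarrow> real^4^4" where
  "mb M i j = (\<chi> k k'. M (4*i + dec4 k) (4*j + dec4 k'))"

lemma sum_idx_blocks: "(\<Sum>a<4*m. f a) = (\<Sum>i<m. \<Sum>k\<in>UNIV. f (4*i + dec4 k :: nat))"
proof -
  have "(\<Sum>p<4. f (4*i+p)) = (\<Sum>k\<in>UNIV. f (4*i + dec4 k))" for i
  proof -
    have "(\<Sum>p<4. f (4*i+p)) = (\<Sum>p<4. f (4*i + dec4 (idx4 p)))"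
      by (rule sum.cong) auto
    also have "\<dots> = (\<Sum>k\<in>UNIV. f (4*i + dec4 k))" by (rule sum4_idx)
    finally show ?thesis .
  qed
  then show ?thesis by (simp add: sum_blocks)
qed

lemma quad_blocks:
  "(\<Sum>a<4*m. \<Sum>b<4*m. v a * M a b * v b) = (\<Sum>i<m. \<Sum>j<m. vb v i \<bullet> (mb M i j *v vb v j))"
proof -
  have "(\<Sum>a<4*m. \<Sum>b<4*m. v a * M a b * v b) =
     (\<Sum>i<m. \<Sum>k\<in>UNIV. \<Sum>j<m. \<Sum>k'\<in>UNIV. v (4*i + dec4 k) * M (4*i + dec4 k) (4*j + dec4 k') * v (4*j + dec4 k'))"
    by (simp add: sum_idx_blocks)
  also have "\<dots> = (\<Sum>i<m. \<Sum>j<m. \<Sum>k\<in>UNIV. \<Sum>k'\<in>UNIV. v (4*i + dec4 k) * M (4*i + dec4 k) (4*j + dec4 k') * v (4*j + dec4 k'))"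
    by (rule sum.cong[OF refl], rule sum.swap)
  also have "\<dots> = (\<Sum>i<m. \<Sum>j<m. vb v i \<bullet> (mb M i j *v vb v j))"
    by (simp add: quad_eq vb_def mb_def)
  finally show ?thesis .
qed

lemma trace_blocks:
  "(\<Sum>a<4*m. \<Sum>b<4*m. A a b * B b a) = (\<Sum>i<m. \<Sum>j<m. mb A i j \<bullet> transpose (mb B j i))"
proof -
  have "(\<Sum>a<4*m. \<Sum>b<4*m. A a b * B b a) =
     (\<Sum>i<m. \<Sum>k\<in>UNIV. \<Sum>j<m. \<Sum>k'\<in>UNIV. A (4*i + dec4 k) (4*j + dec4 k') * B (4*j + dec4 k') (4*i + dec4 k))"
    by (simp add: sum_idx_blocks)
  also have "\<dots> = (\<Sum>i<m. \<Sum>j<m. \<Sum>k\<in>UNIV. \<Sum>k'\<in>UNIV. A (4*i + dec4 k) (4*j + dec4 k') * B (4*j + dec4 k') (4*i + dec4 k))"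
    by (rule sum.cong[OF refl], rule sum.swap)
  also have "\<dots> = (\<Sum>i<m. \<Sum>j<m. mb A i j \<bullet> transpose (mb B j i))"
    by (simp add: inner_mat_eq mb_def transpose_def)
  finally show ?thesis .
qed

lemma sparse_sum:
  fixes F :: "nat \<Rightarrow> nat \<Rightarrow> 'a::comm_monoid_add"
  assumes "\<And>i j. i \<le> l \<Longrightarrow> j \<le> l \<Longrightarrow> \<not> ((i = j) \<or> i = 0 \<or> j = 0) \<Longrightarrow> F i j = 0"
  shows "(\<Sum>i<Suc l. \<Sum>j<Suc l. F i j) = F 0 0 + (\<Sum>i\<in>{1..l}. F i i + F 0 i + F i 0)"
proof -
  have e: "{..<Suc l} = insert 0 {1..l}" by auto
  have row: "(\<Sum>j<Suc l. F i j) = F i 0 + F i i" if i: "i \<in> {1..l}" for i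
  proof -
    have "(\<Sum>j<Suc l. F i j) = F i 0 + (\<Sum>j\<in>{1..l}. F i j)" unfolding e by simp
    also have "(\<Sum>j\<in>{1..l}. F i j) = F i i + (\<Sum>j\<in>{1..l}-{i}. F i j)"
      using i by (simp add: sum.remove)
    also have "(\<Sum>j\<in>{1..l}-{i}. F i j) = 0" using i by (intro sum.neutral) (auto intro!: assms)
    finally show ?thesis by simp
  qed
  have "(\<Sum>i<Suc l. \<Sum>j<Suc l. F i j) = (\<Sum>j<Suc l. F 0 j) + (\<Sum>i\<in>{1..l}. \<Sum>j<Suc l. F i j)"
    unfolding e by simp
  also have "(\<Sum>j<Suc l. F 0 j) = F 0 0 + (\<Sum>i\<in>{1..l}. F 0 i)" unfolding e by simp
  also have "(\<Sum>i\<in>{1..l}. \<Sum>j<Suc l. F i j) = (\<Sum>i\<in>{1..l}. F i 0 + F i i)"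
    by (rule sum.cong[OF refl], rule row)
  finally show ?thesis by (simp add: sum.distrib add_ac)
qed

definition qf :: "nat \<Rightarrow> (nat \<Rightarrow> nat \<Rightarrow> real) \<Rightarrow> (nat \<Rightarrow> real) \<Rightarrow> real" where
  "qf n W v = (\<Sum>a<n. \<Sum>b<n. v a * W a b * v b)"

lemma psd_qf: "psd n W \<longleftrightarrow> (\<forall>a<n. \<forall>b<n. W a b = W b a) \<and> (\<forall>v. 0 \<le> qf n W v)"
  unfolding psd_def qf_def by simp

lemma sum_two_delta:
  fixes N :: nat
  assumes "a < N" "b < N" "a \<noteq> b"
  shows "(\<Sum>j<N. g j * (if j = a then s else if j = b then t else 0)) = g a * s + g b * (t::real)"
proof -
  have "(\<Sum>j<N. g j * (if j = a then s else if j = b then t else 0)) =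
        (\<Sum>j<N. (if j = a then g a * s else 0) + (if j = b then g b * t else 0))"
    using assms by (intro sum.cong) auto
  also have "\<dots> = g a * s + g b * t" using assms by (simp add: sum.distrib sum.delta)
  finally show ?thesis .
qed

lemma sum_one_delta:
  fixes N :: nat
  assumes "a < N"
  shows "(\<Sum>j<N. g j * (if j = a then s else 0)) = g a * (s::real)"
proof -
  have "(\<Sum>j<N. g j * (if j = a then s else 0)) = (\<Sum>j<N. if j = a then g a * s else 0)"
    by (intro sum.cong) auto
  also have "\<dots> = g a * s" using assms by (simp add: sum.delta)
  finally show ?thesis .
qed

lemma qf_two:
  assumes "a < N" "b < N" "a \<noteq> b"
  shows "qf N W (\<lambda>i. if i = a then s else if i = b then t else 0) =
     s * s * W a a + s * t * W a b + t * s * W b a + t * t * W b b"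
proof -
  let ?v = "\<lambda>i. if i = a then s else if i = b then t else 0"
  have "qf N W ?v = (\<Sum>i<N. (\<Sum>j<N. (?v i * W i j) * ?v j))" unfolding qf_def by simp
  also have "\<dots> = (\<Sum>i<N. ?v i * W i a * s + ?v i * W i b * t)"
    by (rule sum.cong[OF refl], rule sum_two_delta[OF assms])
  also have "\<dots> = (\<Sum>i<N. (W i a * s) * ?v i) + (\<Sum>i<N. (W i b * t) * ?v i)"
    by (simp add: sum.distrib mult_ac)
  also have "\<dots> = (W a a * s) * s + (W b a * s) * t + ((W a b * t) * s + (W b b * t) * t)"
    by (simp only: sum_two_delta[OF assms])
  finally show ?thesis by (simp add: algebra_simps)
qed

lemma qf_one:
  assumes "a < N"
  shows "qf N W (\<lambda>i. if i = a then 1 else 0) = W a a"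
proof -
  let ?v = "\<lambda>i. if i = a then 1 else (0::real)"
  have "qf N W ?v = (\<Sum>i<N. (\<Sum>j<N. (?v i * W i j) * ?v j))" unfolding qf_def by simp
  also have "\<dots> = (\<Sum>i<N. ?v i * W i a * 1)"
    by (rule sum.cong[OF refl], rule sum_one_delta[OF assms])
  also have "\<dots> = (\<Sum>i<N. W i a * ?v i)" by (simp add: mult_ac)
  also have "\<dots> = W a a * 1" by (rule sum_one_delta[OF assms])
  finally show ?thesis by simp
qed

lemma quad_lin:
  fixes c e :: real
  assumes "\<And>t. 0 \<le> 2 * t * c + t * t * e"
  shows "c = 0"
proof (rule ccontr)
  assume c: "c \<noteq> 0"
  define E where "E = \<bar>e\<bar> + 1"
  have E: "E > 0" unfolding E_def by simp
  define t where "t = - c / E"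
  have "2 * t * c + t * t * e = c * c * (e - 2 * E) / (E * E)"
    unfolding t_def using E by (simp add: field_simps)
  moreover have "e - 2 * E < 0" unfolding E_def by (cases "e \<ge> 0") auto
  moreover have "c * c > 0" using c not_real_square_gt_zero by blast
  ultimately have "2 * t * c + t * t * e < 0"
    using E by (simp add: divide_neg_pos mult_pos_neg)
  with assms[of t] show False by simp
qed

lemma psd_restrict:
  assumes "psd (Suc n) W" shows "psd n W"
  unfolding psd_qf
proof (intro conjI allI impI)
  fix a b assume "a < n" "b < n"
  then show "W a b = W b a" using assms unfolding psd_qf by simp
next
  fix v
  let ?v = "\<lambda>a. if a < n then v a else (0::real)"
  have "0 \<le> qf (Suc n) W ?v" using assms unfolding psd_qf by blast
  also have "qf (Suc n) W ?v = qf n W ?v" unfolding qf_def by simp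
  also have "\<dots> = qf n W v" unfolding qf_def by (intro sum.cong refl) auto
  finally show "0 \<le> qf n W v" .
qed

lemma psd_gram: "psd n W \<Longrightarrow> \<exists>u. \<forall>a<n. \<forall>b<n. W a b = (\<Sum>k<n. u k a * u k b)"
proof (induction n arbitrary: W)
  case 0 then show ?case by simp
next
  case (Suc n)
  have sym: "W a b = W b a" if "a < Suc n" "b < Suc n" for a b
    using Suc.prems that unfolding psd_qf by simp
  have form: "0 \<le> qf (Suc n) W v" for v using Suc.prems unfolding psd_qf by simp
  define d where "d = W n n"
  have d0: "0 \<le> d" using form[of "\<lambda>i. if i = n then 1 else (0::real)"] qf_one[of n "Suc n" W] d_def by simp
  show ?case
  proof (cases "d = 0")
    case True
    have Wn: "W n b = 0" if b: "b < Suc n" for b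
    proof (cases "b = n")
      case True then show ?thesis using \<open>d = 0\<close> d_def by simp
    next
      case False
      have "0 \<le> 2 * t * W n b + t * t * W b b" for t
        using form[of "\<lambda>i. if i = n then (1::real) else if i = b then (t::real) else 0"]
          qf_two[of n "Suc n" b W 1 t] False b \<open>d = 0\<close> d_def sym[of n b] by simp
      then show ?thesis by (rule quad_lin)
    qed
    obtain u where u: "\<forall>a<n. \<forall>b<n. W a b = (\<Sum>k<n. u k a * u k b)"
      using Suc.IH[OF psd_restrict[OF Suc.prems]] by blast
    define u' where "u' k a = (if k < n \<and> a < n then u k a else 0)" for k a
    have "W a b = (\<Sum>k<Suc n. u' k a * u' k b)" if "a < Suc n" "b < Suc n" for a b
    proof (cases "a < n \<and> b < n")
      case True
      then show ?thesis using u unfolding u'_def by simp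
    next
      case False
      then have "a = n \<or> b = n" using that by auto
      then have "W a b = 0" using Wn sym that by auto
      moreover have "(\<Sum>k<Suc n. u' k a * u' k b) = 0" using False unfolding u'_def by (cases "a < n") auto
      ultimately show ?thesis by simp
    qed
    then show ?thesis by blast
  next
    case False
    then have dp: "0 < d" using d0 by simp
    define r where "r = sqrt d"
    have rp: "0 < r" unfolding r_def using dp by simp
    have rr: "r * r = d" unfolding r_def using d0 by simp
    define w where "w a = W a n / r" for a
    define W' where "W' a b = W a b - w a * w b" for a b
    have psdW': "psd n W'"
      unfolding psd_qf
    proof (intro conjI allI impI)
      fix a b assume "a < n" "b < n"
      then show "W' a b = W' b a" unfolding W'_def using sym by (simp add: mult.commute)
    next
      fix v
      define s where "s = (\<Sum>b<n. W n b * v b)"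
      define \<tau> where "\<tau> = - s / d"
      define v' where "v' a = (if a < n then v a else if a = n then \<tau> else 0)" for a
      have s2: "(\<Sum>a<n. v a * W a n) = s" unfolding s_def
        by (intro sum.cong refl) (simp add: sym mult.commute)
      have "qf (Suc n) W v' = qf n W v + \<tau> * (\<Sum>a<n. v a * W a n) + (\<Sum>b<n. \<tau> * W n b * v b) + \<tau> * W n n * \<tau>"
        unfolding qf_def v'_def by (simp add: sum.distrib sum_distrib_left sum_distrib_right mult_ac)
      also have "\<dots> = qf n W v + 2 * \<tau> * s + \<tau> * \<tau> * d"
        unfolding s2 by (simp add: s_def d_def sum_distrib_left mult.assoc)
      also have "\<dots> = qf n W v - s * s / d" unfolding \<tau>_def using dp by (simp add: field_simps)
      finally have A: "qf (Suc n) W v' = qf n W v - s * s / d" .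
      have "(\<Sum>a<n. v a * w a) = s / r" unfolding w_def s2[symmetric]
        by (simp add: sum_divide_distrib)
      have "qf n W' v = qf n W v - (\<Sum>a<n. \<Sum>b<n. (v a * w a) * (v b * w b))"
        unfolding qf_def W'_def by (simp add: algebra_simps sum_subtractf)
      also have "(\<Sum>a<n. \<Sum>b<n. (v a * w a) * (v b * w b)) = (\<Sum>a<n. v a * w a) * (\<Sum>b<n. v b * w b)"
        by (simp add: sum_product)
      also have "\<dots> = s * s / d" using \<open>(\<Sum>a<n. v a * w a) = s / r\<close> rr by simp
      finally have "qf n W' v = qf (Suc n) W v'" using A by simp
      then show "0 \<le> qf n W' v" using form by simp
    qed
    obtain u where u: "\<forall>a<n. \<forall>b<n. W' a b = (\<Sum>k<n. u k a * u k b)"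
      using Suc.IH[OF psdW'] by blast
    define u' where "u' k a = (if k < n then (if a < n then u k a else 0) else w a)" for k a
    have wn: "w n * w n = d" unfolding w_def d_def[symmetric] using rr rp by (simp add: field_simps)
    have wnb: "w n * w b = W n b" if "b < Suc n" for b
      unfolding w_def d_def[symmetric] using rr rp dp sym[of b n] that by (simp add: field_simps)
    have "W a b = (\<Sum>k<Suc n. u' k a * u' k b)" if ab: "a < Suc n" "b < Suc n" for a b
    proof -
      have e: "(\<Sum>k<Suc n. u' k a * u' k b) = (\<Sum>k<n. (if a < n then u k a else 0) * (if b < n then u k b else 0)) + w a * w b"
        unfolding u'_def by simp
      show ?thesis
      proof (cases "a < n \<and> b < n")
        case True
        then have "W' a b = (\<Sum>k<n. u k a * u k b)" using u by simp
        then show ?thesis unfolding e W'_def using True by simp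
      next
        case False
        then have "a = n \<or> b = n" using ab by auto
        then show ?thesis
        proof
          assume "a = n"
          then show ?thesis unfolding e using wnb[OF ab(2)] by simp
        next
          assume "b = n"
          then show ?thesis unfolding e using wnb[OF ab(1)] sym[OF ab(1)] \<open>b = n\<close>
            by (simp add: mult.commute)
        qed
      qed
    qed
    then show ?thesis by blast
  qed
qed

lemma psd_trace_nonneg:
  assumes "psd n A" "psd n B"
  shows "0 \<le> (\<Sum>a<n. \<Sum>b<n. A a b * B b a)"
proof -
  obtain u where u: "\<forall>a<n. \<forall>b<n. B a b = (\<Sum>k<n. u k a * u k b)"
    using psd_gram[OF assms(2)] by blast
  have "(\<Sum>a<n. \<Sum>b<n. A a b * B b a) = (\<Sum>a<n. \<Sum>b<n. \<Sum>k<n. u k a * A a b * u k b)"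
    using u by (intro sum.cong refl) (simp add: sum_distrib_left mult_ac)
  also have "\<dots> = (\<Sum>a<n. \<Sum>k<n. \<Sum>b<n. u k a * A a b * u k b)"
    by (rule sum.cong[OF refl], rule sum.swap)
  also have "\<dots> = (\<Sum>k<n. \<Sum>a<n. \<Sum>b<n. u k a * A a b * u k b)"
    by (rule sum.swap)
  also have "\<dots> = (\<Sum>k<n. qf n A (u k))"
    unfolding qf_def by simp
  also have "0 \<le> \<dots>" using assms(1) unfolding psd_qf by (simp add: sum_nonneg)
  finally show ?thesis .
qed

definition Pm :: "(nat \<Rightarrow> real^3) \<Rightarrow> (nat \<Rightarrow> real^3) \<Rightarrow> (nat \<Rightarrow> real) \<Rightarrow> nat \<Rightarrow> real^4^4" where
  "Pm y x c k = Qmat (y k) (x k) - (c k)^2 *\<^sub>R mat 1"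

lemma Pm_sym: "transpose (Pm y x c k) = Pm y x c k"
  unfolding Pm_def by (simp add: transpose_diff4 transpose_scalar Qmat_sym)

definition rep :: "(nat \<Rightarrow> nat \<Rightarrow> real^4^4) \<Rightarrow> nat \<Rightarrow> nat \<Rightarrow> real" where
  "rep B a b = B (a div 4) (b div 4) $ idx4 (a mod 4) $ idx4 (b mod 4)"

lemma mb_rep[simp]: "mb (rep B) i j = B i j"
  by (simp add: mb_def rep_def vec_eq_iff)

lemma rep_sym: assumes "\<And>i j. B j i = transpose (B i j)" shows "rep B b a = rep B a b"
  unfolding rep_def by (subst assms) (simp add: transpose_def)

lemma dec4_inj: "dec4 k = dec4 k' \<longleftrightarrow> k = k'"
  by (metis idx4_dec4)

definition Qblk :: "nat \<Rightarrow> (nat \<Rightarrow> real^3) \<Rightarrow> (nat \<Rightarrow> real^3) \<Rightarrow> (nat \<Rightarrow> real) \<Rightarrow> nat \<Rightarrow> nat \<Rightarrow> real^4^4" where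
  "Qblk l y x c i j = (if i = 0 \<and> 1 \<le> j \<and> j \<le> l then (1/2) *\<^sub>R Pm y x c j
      else if j = 0 \<and> 1 \<le> i \<and> i \<le> l then (1/2) *\<^sub>R Pm y x c i else 0)"

lemma bigQ_rep: "bigQ l y x c = rep (Qblk l y x c)"
proof (intro ext)
  fix a b :: nat
  have m: "a mod 4 < 4" "b mod 4 < 4" by auto
  have e: "(mat 1 :: real^4^4) $ idx4 (a mod 4) $ idx4 (b mod 4) = (if a mod 4 = b mod 4 then 1 else 0)"
    using idx4_inj[OF m] by (simp add: mat_def)
  show "bigQ l y x c a b = rep (Qblk l y x c) a b"
    unfolding bigQ_def rep_def Qblk_def Pm_def Let_def using e by (auto simp: field_simps)
qed

definition Bblk :: "nat \<Rightarrow> nat \<Rightarrow> real^4^4" where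
  "Bblk i j = (if i = 0 \<and> j = 0 then mat 1 else 0)"

lemma bigB_rep: "bigB = rep Bblk"
proof (intro ext)
  fix a b :: nat
  have m: "a mod 4 < 4" "b mod 4 < 4" by auto
  have "a = 4 * (a div 4) + a mod 4" "b = 4 * (b div 4) + b mod 4" by auto
  then have ab: "a = b \<longleftrightarrow> a div 4 = b div 4 \<and> a mod 4 = b mod 4" by metis
  have a4: "a < 4 \<longleftrightarrow> a div 4 = 0" by auto
  show "bigB a b = rep Bblk a b"
    unfolding bigB_def rep_def Bblk_def using idx4_inj[OF m] ab a4 by (auto simp: mat_def)
qed

lemma Qblk_T: "Qblk l y x c j i = transpose (Qblk l y x c i j)"
  unfolding Qblk_def by (auto simp: transpose_scalar Pm_sym)

lemma Bblk_T: "Bblk j i = transpose (Bblk i j)"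
  unfolding Bblk_def by auto

lemma idx_lt: "i \<le> l \<Longrightarrow> 4 * i + dec4 k < 4 * Suc l"
  using dec4_lt[of k] by simp

lemma blk_T:
  assumes "\<forall>a<4 * Suc l. \<forall>b<4 * Suc l. W a b = W b a" "i \<le> l" "j \<le> l"
  shows "mb W j i = transpose (mb W i j)"
  using assms idx_lt by (simp add: mb_def transpose_def vec_eq_iff)

lemma obj_formula:
  assumes sym: "\<forall>a<dimS l. \<forall>b<dimS l. W a b = W b a"
    and con: "\<forall>i\<in>{1..l}. \<forall>p<4. \<forall>q<4. W p (4*i+q) = W (4*i+p) (4*i+q)"
  shows "mtrace (dimS l) (mmult (dimS l) (bigQ l y x c) W) = (\<Sum>i\<in>{1..l}. Pm y x c i \<bullet> mb W i i)"
proof -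
  have n: "dimS l = 4 * Suc l" by (simp add: dimS_def)
  have sym': "\<forall>a<4 * Suc l. \<forall>b<4 * Suc l. W a b = W b a" using sym n by simp
  have c0: "mb W 0 i = mb W i i" if "i \<in> {1..l}" for i
    using con that dec4_lt by (simp add: mb_def vec_eq_iff)
  have "mtrace (dimS l) (mmult (dimS l) (bigQ l y x c) W) =
     (\<Sum>a<4 * Suc l. \<Sum>b<4 * Suc l. bigQ l y x c a b * W b a)"
    unfolding mtrace_def mmult_def n by simp
  also have "\<dots> = (\<Sum>i<Suc l. \<Sum>j<Suc l. Qblk l y x c i j \<bullet> transpose (mb W j i))"
    unfolding trace_blocks bigQ_rep by simp
  also have "\<dots> = Qblk l y x c 0 0 \<bullet> transpose (mb W 0 0) +
     (\<Sum>i\<in>{1..l}. Qblk l y x c i i \<bullet> transpose (mb W i i) + Qblk l y x c 0 i \<bullet> transpose (mb W i 0)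
        + Qblk l y x c i 0 \<bullet> transpose (mb W 0 i))"
    by (rule sparse_sum) (auto simp: Qblk_def)
  also have "\<dots> = (\<Sum>i\<in>{1..l}. Pm y x c i \<bullet> mb W i i)"
  proof -
    have "Qblk l y x c i i \<bullet> transpose (mb W i i) + Qblk l y x c 0 i \<bullet> transpose (mb W i 0)
        + Qblk l y x c i 0 \<bullet> transpose (mb W 0 i) = Pm y x c i \<bullet> mb W i i" if i: "i \<in> {1..l}" for i
    proof -
      have t1: "transpose (mb W i 0) = mb W i i"
        using blk_T[OF sym', of 0 i] i c0[OF i] by simp
      have t2: "transpose (mb W 0 i) = mb W i i"
        using blk_T[OF sym', of i i] i c0[OF i] by simp
      show ?thesis using i unfolding t1 t2 by (simp add: Qblk_def inner_scaleR_left)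
    qed
    then show ?thesis by (simp add: Qblk_def)
  qed
  finally show ?thesis .
qed

lemma tr4_transpose: "tr4 (transpose A) = tr4 A"
  by (simp add: tr4_def transpose_def)

lemma tr4_mb: "tr4 (mb W 0 0) = (\<Sum>p<4. W p p)"
proof -
  have "(\<Sum>p<4. W p p) = (\<Sum>p<4. W (dec4 (idx4 p)) (dec4 (idx4 p)))"
    by (rule sum.cong) auto
  also have "\<dots> = (\<Sum>k\<in>UNIV. W (dec4 k) (dec4 k))" by (rule sum4_idx)
  finally show ?thesis by (simp add: tr4_def mb_def)
qed

lemma weak_duality:
  assumes F: "SDR_feasible l W" and G: "D_feasible l y x c \<mu> D"
  shows "\<mu> + (\<Sum>i=1..l. (c i)^2) \<le> SDR_obj l y x c W"
proof -
  have n: "dimS l = 4 * Suc l" by (simp add: dimS_def)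
  have Wpsd: "psd (4 * Suc l) W" using F n unfolding SDR_feasible_def by simp
  have sym': "\<forall>a<4 * Suc l. \<forall>b<4 * Suc l. W a b = W b a" using Wpsd unfolding psd_def by simp
  have con: "\<forall>i\<in>{1..l}. \<forall>p<4. \<forall>q<4. W p (4*i+q) = W (4*i+p) (4*i+q)"
    and tr1: "(\<Sum>p<4. W p p) = 1" using F unfolding SDR_feasible_def by auto
  have adm: "admissible_dual l D" and Mpsd: "psd (4 * Suc l) (\<lambda>a b. bigQ l y x c a b - \<mu> * bigB a b - D a b)"
    using G n unfolding D_feasible_def by auto
  have Dsym: "\<forall>a<4 * Suc l. \<forall>b<4 * Suc l. D a b = D b a"
    and Dii: "\<forall>i\<in>{1..l}. \<forall>p<4. \<forall>q<4. D (4*i+p) (4*i+q) + 2 * D p (4*i+q) = 0"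
    and Dz: "\<forall>a<4 * Suc l. \<forall>b<4 * Suc l. \<not> ((a div 4 = b div 4 \<and> 1 \<le> a div 4) \<or> (a div 4 = 0 \<and> 1 \<le> b div 4)
            \<or> (b div 4 = 0 \<and> 1 \<le> a div 4)) \<longrightarrow> D a b = 0"
    using adm n unfolding admissible_dual_def by auto
  define N where "N = 4 * Suc l"
  have "0 \<le> (\<Sum>a<N. \<Sum>b<N. (bigQ l y x c a b - \<mu> * bigB a b - D a b) * W b a)"
    unfolding N_def by (rule psd_trace_nonneg[OF Mpsd Wpsd])
  also have "\<dots> = (\<Sum>a<N. \<Sum>b<N. bigQ l y x c a b * W b a) - \<mu> * (\<Sum>a<N. \<Sum>b<N. bigB a b * W b a)
      - (\<Sum>a<N. \<Sum>b<N. D a b * W b a)"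
  proof -
    have "(\<Sum>a<N. \<Sum>b<N. (bigQ l y x c a b - \<mu> * bigB a b - D a b) * W b a) =
      (\<Sum>a<N. (\<Sum>b<N. bigQ l y x c a b * W b a) - \<mu> * (\<Sum>b<N. bigB a b * W b a) - (\<Sum>b<N. D a b * W b a))"
      by (intro sum.cong refl) (simp add: algebra_simps sum_subtractf sum_distrib_left sum.distrib)
    also have "\<dots> = (\<Sum>a<N. \<Sum>b<N. bigQ l y x c a b * W b a) - \<mu> * (\<Sum>a<N. \<Sum>b<N. bigB a b * W b a)
      - (\<Sum>a<N. \<Sum>b<N. D a b * W b a)"
      by (simp add: sum_subtractf sum_distrib_left)
    finally show ?thesis .
  qed
  finally have main: "0 \<le> (\<Sum>a<N. \<Sum>b<N. bigQ l y x c a b * W b a) - \<mu> * (\<Sum>a<N. \<Sum>b<N. bigB a b * W b a)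
      - (\<Sum>a<N. \<Sum>b<N. D a b * W b a)" .
  have TB: "(\<Sum>a<N. \<Sum>b<N. bigB a b * W b a) = 1"
  proof -
    have "(\<Sum>a<N. \<Sum>b<N. bigB a b * W b a) = (\<Sum>i<Suc l. \<Sum>j<Suc l. Bblk i j \<bullet> transpose (mb W j i))"
      unfolding N_def trace_blocks bigB_rep by simp
    also have "\<dots> = Bblk 0 0 \<bullet> transpose (mb W 0 0) +
     (\<Sum>i\<in>{1..l}. Bblk i i \<bullet> transpose (mb W i i) + Bblk 0 i \<bullet> transpose (mb W i 0)
        + Bblk i 0 \<bullet> transpose (mb W 0 i))"
      by (rule sparse_sum) (auto simp: Bblk_def)
    also have "\<dots> = tr4 (mb W 0 0)"
      by (simp add: Bblk_def inner_commute[of "mat 1"] inner_mat1 tr4_transpose)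
    finally show ?thesis using tr1 tr4_mb by simp
  qed
  have TD: "(\<Sum>a<N. \<Sum>b<N. D a b * W b a) = 0"
  proof -
    have "(\<Sum>a<N. \<Sum>b<N. D a b * W b a) = (\<Sum>i<Suc l. \<Sum>j<Suc l. mb D i j \<bullet> transpose (mb W j i))"
      unfolding N_def trace_blocks by simp
    also have "\<dots> = mb D 0 0 \<bullet> transpose (mb W 0 0) +
     (\<Sum>i\<in>{1..l}. mb D i i \<bullet> transpose (mb W i i) + mb D 0 i \<bullet> transpose (mb W i 0)
        + mb D i 0 \<bullet> transpose (mb W 0 i))"
    proof (rule sparse_sum)
      fix i j assume "i \<le> l" "j \<le> l" "\<not> (i = j \<or> i = 0 \<or> j = 0)"
      then have "mb D i j = 0"
        using Dz idx_lt by (simp add: mb_def vec_eq_iff)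
      then show "mb D i j \<bullet> transpose (mb W j i) = 0" by simp
    qed
    also have "mb D 0 0 = 0"
      using Dz idx_lt[of 0 l] by (simp add: mb_def vec_eq_iff)
    also have "(\<Sum>i\<in>{1..l}. mb D i i \<bullet> transpose (mb W i i) + mb D 0 i \<bullet> transpose (mb W i 0)
        + mb D i 0 \<bullet> transpose (mb W 0 i)) = 0"
    proof (rule sum.neutral, rule ballI)
      fix i assume i: "i \<in> {1..l}"
      have il: "i \<le> l" using i by simp
      define E where "E = mb D 0 i"
      define X where "X = mb W i i"
      have c0: "mb W 0 i = X" unfolding X_def
        using con i dec4_lt by (simp add: mb_def vec_eq_iff)
      have XT: "transpose X = X" unfolding X_def using blk_T[OF sym' il il] by simp
      have W0: "transpose (mb W i 0) = X"
        using blk_T[OF sym', of 0 i] il c0 by simp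
      have D0: "mb D i 0 = transpose E" unfolding E_def
        using blk_T[OF Dsym, of 0 i] il by simp
      have h: "D (4*i+dec4 k) (4*i+dec4 k') + 2 * D (dec4 k) (4*i+dec4 k') = 0" for k k'
        using Dii i dec4_lt by blast
      have h': "D (4*i+dec4 k) (4*i+dec4 k') = -2 * D (dec4 k) (4*i+dec4 k')" for k k'
        using h[of k k'] by linarith
      have Dd: "mb D i i = (-2) *\<^sub>R E" unfolding E_def
        by (simp add: mb_def vec_eq_iff h')
      show "mb D i i \<bullet> transpose (mb W i i) + mb D 0 i \<bullet> transpose (mb W i 0)
        + mb D i 0 \<bullet> transpose (mb W 0 i) = 0"
        unfolding Dd D0 W0 c0 X_def[symmetric] E_def[symmetric] XT inner_transpose4
        by simp
    qed
    finally show ?thesis by simp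
  qed
  have "(\<Sum>a<N. \<Sum>b<N. bigQ l y x c a b * W b a) = mtrace (dimS l) (mmult (dimS l) (bigQ l y x c) W)"
    unfolding mtrace_def mmult_def N_def n by simp
  then have "\<mu> \<le> mtrace (dimS l) (mmult (dimS l) (bigQ l y x c) W)" using main TB TD by simp
  then show ?thesis unfolding SDR_obj_def by simp
qed

lemma pid:
  fixes P G :: "real^4^4" and xi x0 :: "real^4"
  shows "xi \<bullet> ((P + 2 *\<^sub>R G) *v xi) + x0 \<bullet> ((- G) *v xi) + xi \<bullet> ((- G) *v x0) =
     (x0 - xi) \<bullet> (G *v (x0 - xi)) + xi \<bullet> ((P + G) *v xi) - x0 \<bullet> (G *v x0)"
  by (simp add: matrix_vector_mult_add_rdistrib matrix_vector_mult_diff_distrib scaleR_mv neg_mv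
      inner_diff_left inner_diff_right inner_add_right)

lemma dual_construct:
  fixes \<Gamma> :: "nat \<Rightarrow> real^4^4" and \<mu> :: real
  assumes G: "\<forall>i\<in>{1..l}. psd4 (\<Gamma> i) \<and> psd4 (Pm y x c i + \<Gamma> i)"
    and T: "psd4 ((- \<mu>) *\<^sub>R mat 1 - (\<Sum>i\<in>{1..l}. \<Gamma> i))"
  shows "\<exists>D. D_feasible l y x c \<mu> D"
proof -
  define S where "S i = Pm y x c i + 2 *\<^sub>R \<Gamma> i" for i
  have Ssym: "transpose (S i) = S i" if "i \<in> {1..l}" for i
    using G that Pm_sym unfolding S_def psd4_def by (simp add: transpose_add4 transpose_scalar)
  define Dblk where "Dblk i j = (if i = j \<and> 1 \<le> i \<and> i \<le> l then - S i
      else if i = 0 \<and> 1 \<le> j \<and> j \<le> l then (1/2) *\<^sub>R S j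
      else if j = 0 \<and> 1 \<le> i \<and> i \<le> l then (1/2) *\<^sub>R S i else 0)" for i j
  have Dblk_T: "Dblk j i = transpose (Dblk i j)" for i j
    unfolding Dblk_def using Ssym by (auto simp: transpose_neg4 transpose_scalar)
  define D where "D = rep Dblk"
  have n: "dimS l = 4 * Suc l" by (simp add: dimS_def)
  have adm: "admissible_dual l D"
    unfolding admissible_dual_def
  proof (intro conjI)
    show "\<forall>a<dimS l. \<forall>b<dimS l. D a b = D b a"
      unfolding D_def using rep_sym[of Dblk, OF Dblk_T] by metis
    show "\<forall>i\<in>{1..l}. \<forall>p<4. \<forall>q<4. D (4 * i + p) (4 * i + q) + 2 * D p (4 * i + q) = 0"
    proof (intro ballI allI impI)
      fix i p q :: nat assume i: "i \<in> {1..l}" and pq: "p < 4" "q < 4"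
      have e: "(4*i+p) div 4 = i" "(4*i+p) mod 4 = p" "(4*i+q) div 4 = i" "(4*i+q) mod 4 = q"
        "p div 4 = 0" "p mod 4 = p" using pq by auto
      have d1: "Dblk i i = - S i" "Dblk 0 i = (1/2) *\<^sub>R S i" using i unfolding Dblk_def by auto
      show "D (4 * i + p) (4 * i + q) + 2 * D p (4 * i + q) = 0"
        unfolding D_def rep_def e d1 by simp
    qed
    show "\<forall>a<dimS l. \<forall>b<dimS l. \<not> (a div 4 = b div 4 \<and> 1 \<le> a div 4 \<or> a div 4 = 0 \<and> 1 \<le> b div 4 \<or>
       b div 4 = 0 \<and> 1 \<le> a div 4) \<longrightarrow> D a b = 0"
    proof (intro allI impI)
      fix a b :: nat
      have Dz: "Dblk i j = 0" if "\<not> (i = j \<and> 1 \<le> i \<or> i = 0 \<and> 1 \<le> j \<or> j = 0 \<and> 1 \<le> i)" for i j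
        using that unfolding Dblk_def by auto
      assume "\<not> (a div 4 = b div 4 \<and> 1 \<le> a div 4 \<or> a div 4 = 0 \<and> 1 \<le> b div 4 \<or>
       b div 4 = 0 \<and> 1 \<le> a div 4)"
      then have "Dblk (a div 4) (b div 4) = 0" by (rule Dz)
      then show "D a b = 0" unfolding D_def rep_def by simp
    qed
  qed
  define Mblk where "Mblk i j = Qblk l y x c i j - \<mu> *\<^sub>R Bblk i j - Dblk i j" for i j
  have Mrep: "(\<lambda>a b. bigQ l y x c a b - \<mu> * bigB a b - D a b) = rep Mblk"
    unfolding bigQ_rep bigB_rep D_def Mblk_def by (simp add: rep_def fun_eq_iff)
  have Mblk_T: "Mblk j i = transpose (Mblk i j)" for i j
    unfolding Mblk_def by (subst Qblk_T, subst Bblk_T, subst Dblk_T) (simp add: transpose_diff4 transpose_scalar)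
  have psdM: "psd (dimS l) (rep Mblk)"
    unfolding psd_def
  proof (intro conjI allI impI)
    fix a b show "rep Mblk a b = rep Mblk b a" using rep_sym[of Mblk, OF Mblk_T] by metis
  next
    fix v :: "nat \<Rightarrow> real"
    define xb where "xb = vb v"
    have "(\<Sum>a<dimS l. \<Sum>b<dimS l. v a * rep Mblk a b * v b) = (\<Sum>i<Suc l. \<Sum>j<Suc l. xb i \<bullet> (Mblk i j *v xb j))"
      unfolding n quad_blocks xb_def by simp
    also have "\<dots> = xb 0 \<bullet> (Mblk 0 0 *v xb 0) +
       (\<Sum>i\<in>{1..l}. xb i \<bullet> (Mblk i i *v xb i) + xb 0 \<bullet> (Mblk 0 i *v xb i) + xb i \<bullet> (Mblk i 0 *v xb 0))"
    proof (rule sparse_sum)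
      fix i j assume "i \<le> l" "j \<le> l" "\<not> (i = j \<or> i = 0 \<or> j = 0)"
      then have "Mblk i j = 0" unfolding Mblk_def Qblk_def Bblk_def Dblk_def by auto
      then show "xb i \<bullet> (Mblk i j *v xb j) = 0" by simp
    qed
    also have "\<dots> = xb 0 \<bullet> (((- \<mu>) *\<^sub>R mat 1) *v xb 0) +
       (\<Sum>i\<in>{1..l}. xb i \<bullet> ((Pm y x c i + 2 *\<^sub>R \<Gamma> i) *v xb i) + xb 0 \<bullet> ((- \<Gamma> i) *v xb i)
          + xb i \<bullet> ((- \<Gamma> i) *v xb 0))"
    proof -
      have "Mblk 0 0 = (- \<mu>) *\<^sub>R mat 1" unfolding Mblk_def Qblk_def Bblk_def Dblk_def by simp
      moreover have "Mblk i i = Pm y x c i + 2 *\<^sub>R \<Gamma> i" "Mblk 0 i = - \<Gamma> i" "Mblk i 0 = - \<Gamma> i"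
        if "i \<in> {1..l}" for i
        using that unfolding Mblk_def Qblk_def Bblk_def Dblk_def S_def by (auto simp: algebra_simps)
      ultimately show ?thesis by (intro arg_cong2[where f = "(+)"] sum.cong) auto
    qed
    also have "\<dots> = xb 0 \<bullet> (((- \<mu>) *\<^sub>R mat 1 - (\<Sum>i\<in>{1..l}. \<Gamma> i)) *v xb 0) +
       (\<Sum>i\<in>{1..l}. (xb 0 - xb i) \<bullet> (\<Gamma> i *v (xb 0 - xb i)) + xb i \<bullet> ((Pm y x c i + \<Gamma> i) *v xb i))"
      by (simp add: pid sum_subtractf matrix_vector_mult_diff_rdistrib inner_diff_right sum_mv inner_sum_right)
    also have "0 \<le> \<dots>"
      using T G by (intro add_nonneg_nonneg sum_nonneg psd4_form) auto
    finally show "0 \<le> (\<Sum>a<dimS l. \<Sum>b<dimS l. v a * rep Mblk a b * v b)" .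
  qed
  have "D_feasible l y x c \<mu> D"
    unfolding D_feasible_def using adm psdM Mrep by simp
  then show ?thesis by blast
qed

lemma inner_mv_transpose: "((A::real^'n^'n) *v u) \<bullet> w = u \<bullet> (transpose A *v w)"
proof -
  have "(A *v u) \<bullet> w = w \<bullet> (A *v u)" by (rule inner_commute)
  also have "\<dots> = (\<Sum>i\<in>UNIV. \<Sum>j\<in>UNIV. w$i * A$i$j * u$j)" by (rule quad_eq)
  also have "\<dots> = (\<Sum>j\<in>UNIV. \<Sum>i\<in>UNIV. w$i * A$i$j * u$j)" by (rule sum.swap)
  also have "\<dots> = u \<bullet> (transpose A *v w)"
    by (simp add: quad_eq transpose_def mult_ac)
  finally show ?thesis .
qed

lemma sym_inner: "transpose A = A \<Longrightarrow> u \<bullet> ((A::real^'n^'n) *v w) = w \<bullet> (A *v u)"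
  using inner_mv_transpose[of A w u] by (simp add: inner_commute)

lemma mv_sum: "finite I \<Longrightarrow> (A::real^'n^'m) *v (\<Sum>i\<in>I. f i) = (\<Sum>i\<in>I. A *v f i)"
  by (induction I rule: finite_induct) (auto simp: matrix_vector_right_distrib)

lemma mv_neg: "(A::real^'n^'m) *v (- x) = - (A *v x)"
  by (simp add: matrix_vector_mult_def vec_eq_iff sum_negf)

lemma bil4: fixes A B :: "real^4^4" shows
  "x \<bullet> ((A - B) *v x) + (x + z) \<bullet> (B *v (x + z)) = x \<bullet> (A *v x) + x \<bullet> (B *v z) + z \<bullet> (B *v x) + z \<bullet> (B *v z)"
  by (simp add: matrix_vector_mult_diff_rdistrib matrix_vector_right_distrib inner_add_left inner_add_right inner_diff_right)

lemma primal_construct: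
  fixes W4 :: "real^4^4" and X :: "nat \<Rightarrow> real^4^4" and \<delta> :: real
  assumes Wd: "psd4 (W4 - \<delta> *\<^sub>R mat 1)" and dpos: "\<delta> > 0" and tr: "tr4 W4 = 1"
    and X: "\<And>i. psd4 (X i) \<and> psd4 (W4 - X i)"
  shows "\<exists>W. SDR_feasible l W \<and> SDR_obj l y x c W = (\<Sum>i\<in>{1..l}. Pm y x c i \<bullet> X i) + (\<Sum>i=1..l. (c i)^2)"
proof -
  have W4: "psd4 W4" using psd4_W Wd dpos by simp
  have W4T: "transpose W4 = W4" using W4 unfolding psd4_def by simp
  have XT: "transpose (X i) = X i" for i using X unfolding psd4_def by simp
  have "inj ((*v) W4)"
  proof (rule injI)
    fix u v assume e: "W4 *v u = W4 *v v"
    let ?z = "u - v"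
    have z0: "W4 *v ?z = 0" using e by (simp add: matrix_vector_mult_diff_distrib)
    have "0 \<le> ?z \<bullet> ((W4 - \<delta> *\<^sub>R mat 1) *v ?z)" by (rule psd4_form[OF Wd])
    also have "\<dots> = - \<delta> * (?z \<bullet> ?z)" using z0
      by (simp add: matrix_vector_mult_diff_rdistrib scaleR_mv inner_diff_right)
    finally have "?z \<bullet> ?z \<le> 0" using dpos by (simp add: mult_le_0_iff)
    then have "?z \<bullet> ?z = 0" using inner_ge_zero[of ?z] by linarith
    then show "u = v" by simp
  qed
  then obtain Wi where WiW: "Wi ** W4 = mat 1" using matrix_left_invertible_injective by blast
  then have WWi: "W4 ** Wi = mat 1" using matrix_left_right_inverse by blast
  have WiT: "transpose Wi = Wi"
  proof -
    have "W4 ** transpose Wi = mat 1"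
      using WiW W4T by (metis matrix_transpose_mul transpose_mat)
    then have "Wi ** (W4 ** transpose Wi) = Wi" by (simp add: matrix_mul_rid)
    then show ?thesis using WiW by (simp add: matrix_mul_assoc matrix_mul_lid)
  qed
  have WWiv: "W4 *v (Wi *v z) = z" for z
    by (simp add: matrix_vector_mul_assoc WWi)
  have L1: "(Wi *v (X i *v a)) \<bullet> (X j *v b) = a \<bullet> ((X i ** Wi ** X j) *v b)" for i j a b
  proof -
    have "(Wi *v (X i *v a)) \<bullet> (X j *v b) = (X i *v a) \<bullet> (Wi *v (X j *v b))"
      using inner_mv_transpose[of Wi] WiT by simp
    also have "\<dots> = a \<bullet> (X i *v (Wi *v (X j *v b)))"
      using inner_mv_transpose[of "X i"] XT by simp
    also have "\<dots> = a \<bullet> ((X i ** Wi ** X j) *v b)" by (simp add: matrix_vector_mul_assoc matrix_mul_assoc)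
    finally show ?thesis .
  qed
  have Rpsd: "psd4 (X i - X i ** Wi ** X i)" for i
    unfolding psd4_def
  proof (intro conjI allI)
    show "transpose (X i - X i ** Wi ** X i) = X i - X i ** Wi ** X i"
      by (simp add: transpose_diff4 matrix_transpose_mul XT WiT matrix_mul_assoc)
  next
    fix z :: "real^4"
    define w where "w = Wi *v (X i *v z)"
    have "0 \<le> (- w) \<bullet> ((W4 - X i) *v (- w)) + (- w + z) \<bullet> (X i *v (- w + z))"
      using X[of i] by (intro add_nonneg_nonneg psd4_form) auto
    also have "\<dots> = (- w) \<bullet> (W4 *v (- w)) + (- w) \<bullet> (X i *v z) + z \<bullet> (X i *v (- w)) + z \<bullet> (X i *v z)"
      by (rule bil4)
    also have "\<dots> = z \<bullet> (X i *v z) - w \<bullet> (X i *v z)"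
    proof -
      have "(- w) \<bullet> (W4 *v (- w)) = w \<bullet> (X i *v z)" unfolding w_def by (simp add: WWiv mv_neg)
      moreover have "z \<bullet> (X i *v (- w)) = - (w \<bullet> (X i *v z))"
        using sym_inner[OF XT[of i], of z w] by (simp add: mv_neg)
      ultimately show ?thesis by simp
    qed
    also have "w \<bullet> (X i *v z) = z \<bullet> ((X i ** Wi ** X i) *v z)" unfolding w_def by (rule L1)
    finally show "0 \<le> z \<bullet> ((X i - X i ** Wi ** X i) *v z)"
      by (simp add: matrix_vector_mult_diff_rdistrib inner_diff_right)
  qed
  define Wblk where "Wblk i j = (if i = 0 \<and> j = 0 then W4 else if i = 0 then X j else if j = 0 then X i
      else if i = j then X i else X i ** Wi ** X j)" for i j
  have Wblk_T: "Wblk j i = transpose (Wblk i j)" for i j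
    unfolding Wblk_def using W4T XT WiT
    by (auto simp: matrix_transpose_mul matrix_mul_assoc)
  define W where "W = rep Wblk"
  have n: "dimS l = 4 * Suc l" by (simp add: dimS_def)
  have Wsym: "\<forall>a b. W a b = W b a" unfolding W_def using rep_sym[of Wblk, OF Wblk_T] by metis
  have psdW: "psd (dimS l) W"
    unfolding psd_def
  proof (intro conjI allI impI)
    fix a b show "W a b = W b a" using Wsym by metis
  next
    fix v :: "nat \<Rightarrow> real"
    define xb where "xb = vb v"
    define A where "A = {1..l}"
    have finA: "finite A" and A0: "0 \<notin> A" unfolding A_def by auto
    have SucA: "{..<Suc l} = insert 0 A" unfolding A_def by auto
    define F where "F i j = xb i \<bullet> (Wblk i j *v xb j)" for i j
    have "(\<Sum>a<dimS l. \<Sum>b<dimS l. v a * W a b * v b) = (\<Sum>i<Suc l. \<Sum>j<Suc l. F i j)"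
      unfolding n quad_blocks xb_def F_def W_def by simp
    also have "\<dots> = F 0 0 + (\<Sum>j\<in>A. F 0 j) + (\<Sum>i\<in>A. F i 0 + (\<Sum>j\<in>A. F i j))"
      unfolding SucA using finA A0 by (simp add: sum.distrib add_ac)
    also have "\<dots> = xb 0 \<bullet> (W4 *v xb 0) + (\<Sum>j\<in>A. xb 0 \<bullet> (X j *v xb j)) +
        (\<Sum>i\<in>A. xb 0 \<bullet> (X i *v xb i) + ((\<Sum>j\<in>A. xb i \<bullet> ((X i ** Wi ** X j) *v xb j))
          + xb i \<bullet> ((X i - X i ** Wi ** X i) *v xb i)))"
    proof -
      have "F i 0 = xb 0 \<bullet> (X i *v xb i)" if "i \<in> A" for i
        using that A0 sym_inner[OF XT] unfolding F_def Wblk_def by auto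
      moreover have "(\<Sum>j\<in>A. F i j) = (\<Sum>j\<in>A. xb i \<bullet> ((X i ** Wi ** X j) *v xb j))
          + xb i \<bullet> ((X i - X i ** Wi ** X i) *v xb i)" if i: "i \<in> A" for i
      proof -
        have "(\<Sum>j\<in>A. F i j) = (\<Sum>j\<in>A. xb i \<bullet> ((X i ** Wi ** X j) *v xb j) +
            (if j = i then xb i \<bullet> ((X i - X i ** Wi ** X i) *v xb i) else 0))"
          using i A0 unfolding F_def Wblk_def
          by (intro sum.cong refl) (auto simp: matrix_vector_mult_diff_rdistrib inner_diff_right)
        also have "\<dots> = (\<Sum>j\<in>A. xb i \<bullet> ((X i ** Wi ** X j) *v xb j))
          + xb i \<bullet> ((X i - X i ** Wi ** X i) *v xb i)"
          using i finA by (simp add: sum.distrib)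
        finally show ?thesis .
      qed
      moreover have "F 0 j = xb 0 \<bullet> (X j *v xb j)" if "j \<in> A" for j
        using that A0 unfolding F_def Wblk_def by auto
      moreover have "F 0 0 = xb 0 \<bullet> (W4 *v xb 0)" unfolding F_def Wblk_def by simp
      ultimately show ?thesis by (simp add: sum.distrib)
    qed
    also have "\<dots> = (xb 0 + (\<Sum>i\<in>A. Wi *v (X i *v xb i))) \<bullet> (W4 *v (xb 0 + (\<Sum>i\<in>A. Wi *v (X i *v xb i))))
        + (\<Sum>i\<in>A. xb i \<bullet> ((X i - X i ** Wi ** X i) *v xb i))"
    proof -
      let ?u = "\<Sum>i\<in>A. Wi *v (X i *v xb i)"
      have Wu: "W4 *v ?u = (\<Sum>i\<in>A. X i *v xb i)" using finA by (simp add: mv_sum WWiv)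
      have e1: "xb 0 \<bullet> (W4 *v ?u) = (\<Sum>i\<in>A. xb 0 \<bullet> (X i *v xb i))"
        unfolding Wu by (simp add: inner_sum_right)
      have e2: "?u \<bullet> (W4 *v xb 0) = (\<Sum>i\<in>A. xb 0 \<bullet> (X i *v xb i))"
        using sym_inner[OF W4T, of ?u "xb 0"] e1 by simp
      have e3: "?u \<bullet> (W4 *v ?u) = (\<Sum>i\<in>A. \<Sum>j\<in>A. xb i \<bullet> ((X i ** Wi ** X j) *v xb j))"
        unfolding Wu by (simp add: inner_sum_left inner_sum_right L1) (rule sum.swap)
      show ?thesis
        by (simp add: matrix_vector_right_distrib inner_add_left inner_add_right e1 e2 e3 sum.distrib add_ac)
    qed
    also have "0 \<le> \<dots>"
      by (intro add_nonneg_nonneg sum_nonneg psd4_form[OF W4] psd4_form[OF Rpsd])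
    finally show "0 \<le> (\<Sum>a<dimS l. \<Sum>b<dimS l. v a * W a b * v b)" .
  qed
  have con: "\<forall>i\<in>{1..l}. \<forall>p<4. \<forall>q<4. W p (4*i+q) = W (4*i+p) (4*i+q)"
  proof (intro ballI allI impI)
    fix i p q :: nat assume i: "i \<in> {1..l}" and pq: "p < 4" "q < 4"
    have e: "(4*i+p) div 4 = i" "(4*i+p) mod 4 = p" "(4*i+q) div 4 = i" "(4*i+q) mod 4 = q"
      "p div 4 = 0" "p mod 4 = p" using pq by auto
    show "W p (4*i+q) = W (4*i+p) (4*i+q)" using i unfolding W_def rep_def e Wblk_def by auto
  qed
  have trW: "(\<Sum>p<4. W p p) = 1"
  proof -
    have "(\<Sum>p<4. W p p) = (\<Sum>p<4. W4 $ idx4 p $ idx4 p)"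
      unfolding W_def rep_def Wblk_def by (intro sum.cong refl) simp
    also have "\<dots> = tr4 W4" unfolding tr4_def by (rule sum4_idx)
    finally show ?thesis using tr by simp
  qed
  have feas: "SDR_feasible l W" unfolding SDR_feasible_def using psdW con trW by simp
  have "mtrace (dimS l) (mmult (dimS l) (bigQ l y x c) W) = (\<Sum>i\<in>{1..l}. Pm y x c i \<bullet> mb W i i)"
    by (rule obj_formula) (use Wsym con in auto)
  also have "\<dots> = (\<Sum>i\<in>{1..l}. Pm y x c i \<bullet> X i)"
    unfolding W_def by (intro sum.cong refl) (simp add: Wblk_def)
  finally have "SDR_obj l y x c W = (\<Sum>i\<in>{1..l}. Pm y x c i \<bullet> X i) + (\<Sum>i=1..l. (c i)^2)"
    unfolding SDR_obj_def by simp
  then show ?thesis using feas by blast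
qed

lemma tr4_add: "tr4 (A + B) = tr4 A + tr4 B"
  by (simp add: tr4_def sum.distrib)

lemma tr4_mat1: "tr4 (mat 1 :: real^4^4) = 4"
  by (simp add: tr4_def mat_def)

lemma arith_final:
  fixes v \<epsilon> \<kappa> L :: real
  assumes eps: "\<epsilon> > 0" and kdef: "\<kappa> = \<epsilon> / (4 * (\<bar>v\<bar> + \<epsilon> + 1))"
    and L: "L < \<epsilon> / 4"
    and lt: "v < (v - \<epsilon>) / (1 + \<kappa>) + L"
  shows False
proof -
  define K where "K = \<bar>v\<bar> + \<epsilon> + 1"
  have K: "K > 0" unfolding K_def using eps by simp
  have k0: "0 \<le> \<kappa>" unfolding kdef using eps K K_def by simp
  have "\<kappa> * (\<bar>v\<bar> + \<epsilon>) \<le> \<kappa> * K" unfolding K_def using k0 by (intro mult_left_mono) auto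
  also have "\<kappa> * K = \<epsilon> / 4" unfolding kdef K_def[symmetric] using K by simp
  finally have k1: "\<kappa> * (\<bar>v\<bar> + \<epsilon>) \<le> \<epsilon> / 4" .
  have "- (\<bar>v\<bar> + \<epsilon>) \<le> v - \<epsilon>/2" using eps by (cases "v \<ge> 0") auto
  then have "\<kappa> * (- (\<bar>v\<bar> + \<epsilon>)) \<le> \<kappa> * (v - \<epsilon>/2)" using k0 by (rule mult_left_mono)
  moreover have "\<kappa> * (- (\<bar>v\<bar> + \<epsilon>)) = - (\<kappa> * (\<bar>v\<bar> + \<epsilon>))" by (rule mult_minus_right)
  ultimately have k2: "- (\<epsilon>/4) \<le> \<kappa> * (v - \<epsilon>/2)" using k1 by linarith
  have "v - \<epsilon> \<le> (v - \<epsilon>/2) * (1 + \<kappa>)" using k2 eps by (simp add: algebra_simps)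
  then have "(v - \<epsilon>) / (1 + \<kappa>) \<le> v - \<epsilon>/2" using k0 by (simp add: divide_le_eq)
  then show False using lt L eps by linarith
qed

lemma main_ineq:
  assumes low: "\<And>W. SDR_feasible l W \<Longrightarrow> r < SDR_obj l y x c W" and eps: "\<epsilon> > 0"
  shows "\<exists>\<mu> D. D_feasible l y x c \<mu> D \<and> r - \<epsilon> \<le> \<mu> + (\<Sum>i=1..l. (c i)^2)"
proof -
  define C where "C = (\<Sum>i=1..l. (c i)^2)"
  define v where "v = r - C"
  define t where "t = \<epsilon> - v"
  have Psym: "\<And>i. i \<in> {1..l} \<Longrightarrow> transpose (Pm y x c i) = Pm y x c i" by (rule Pm_sym)
  have os: "(\<exists>\<Gamma>. (\<forall>i\<in>{1..l}. psd4 (\<Gamma> i) \<and> psd4 (Pm y x c i + \<Gamma> i)) \<and> psd4 (t *\<^sub>R mat 1 - (\<Sum>i\<in>{1..l}. \<Gamma> i)))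
    \<or> (\<exists>W0. psd4 W0 \<and> tr4 W0 = 1 \<and>
         (\<forall>\<Gamma>. (\<forall>i\<in>{1..l}. psd4 (\<Gamma> i) \<and> psd4 (Pm y x c i + \<Gamma> i)) \<longrightarrow> t \<le> W0 \<bullet> (\<Sum>i\<in>{1..l}. \<Gamma> i)))"
    by (rule outer_sep) (auto simp: Pm_sym)
  from os show ?thesis
  proof (elim disjE exE conjE)
    fix \<Gamma> assume G: "\<forall>i\<in>{1..l}. psd4 (\<Gamma> i) \<and> psd4 (Pm y x c i + \<Gamma> i)"
      and T: "psd4 (t *\<^sub>R mat 1 - (\<Sum>i\<in>{1..l}. \<Gamma> i))"
    have "psd4 ((- (- t)) *\<^sub>R mat 1 - (\<Sum>i\<in>{1..l}. \<Gamma> i))" using T by simp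
    then obtain D where "D_feasible l y x c (- t) D" using dual_construct[OF G] by blast
    moreover have "r - \<epsilon> \<le> - t + C" unfolding t_def v_def by simp
    ultimately show ?thesis unfolding C_def by blast
  next
    fix W0 assume W0: "psd4 W0" "tr4 W0 = 1"
      and sep: "\<forall>\<Gamma>. (\<forall>i\<in>{1..l}. psd4 (\<Gamma> i) \<and> psd4 (Pm y x c i + \<Gamma> i)) \<longrightarrow> t \<le> W0 \<bullet> (\<Sum>i\<in>{1..l}. \<Gamma> i)"
    define \<kappa> where "\<kappa> = \<epsilon> / (4 * (\<bar>v\<bar> + \<epsilon> + 1))"
    have kpos: "0 < \<kappa>" unfolding \<kappa>_def using eps by (simp add: add_pos_nonneg)
    define \<delta> where "\<delta> = \<kappa> / 4"
    define W where "W = (1 / (1 + \<kappa>)) *\<^sub>R (W0 + \<delta> *\<^sub>R mat 1)"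
    define \<delta>' where "\<delta>' = \<delta> / (1 + \<kappa>)"
    have dp: "0 < \<delta>'" unfolding \<delta>'_def \<delta>_def using kpos by simp
    have Wd: "psd4 (W - \<delta>' *\<^sub>R mat 1)"
    proof -
      have "W - \<delta>' *\<^sub>R mat 1 = (1 / (1 + \<kappa>)) *\<^sub>R W0"
        unfolding W_def \<delta>'_def by (simp add: algebra_simps divide_inverse)
      then show ?thesis using psd4_scale[OF W0(1), of "1 / (1 + \<kappa>)"] kpos by simp
    qed
    have trW: "tr4 W = 1"
    proof -
      have nz: "1 + \<kappa> \<noteq> 0" using kpos by simp
      have "tr4 W = (1/(1+\<kappa>)) * (tr4 W0 + \<delta> * 4)" unfolding W_def by (simp add: tr4_scale tr4_add tr4_mat1)
      also have "\<dots> = (1/(1+\<kappa>)) * (1 + \<kappa>)" unfolding \<delta>_def using W0(2) by simp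
      also have "\<dots> = 1" using nz by simp
      finally show ?thesis .
    qed
    define \<eta> where "\<eta> = \<epsilon> / (4 * (real l + 1))"
    have eta: "0 < \<eta>" unfolding \<eta>_def using eps by simp
    have "\<forall>i. \<exists>p. psd4 (fst p) \<and> psd4 (Pm y x c i + fst p) \<and> psd4 (snd p) \<and> psd4 (W - snd p) \<and>
        Pm y x c i \<bullet> snd p \<le> - (W \<bullet> fst p) + \<eta>"
      using perblock[OF Wd dp Pm_sym eta] by fastforce
    then obtain f where f: "\<And>i. psd4 (fst (f i)) \<and> psd4 (Pm y x c i + fst (f i)) \<and> psd4 (snd (f i)) \<and>
        psd4 (W - snd (f i)) \<and> Pm y x c i \<bullet> snd (f i) \<le> - (W \<bullet> fst (f i)) + \<eta>"
      by metis
    define G where "G i = fst (f i)" for i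
    define X where "X i = snd (f i)" for i
    obtain Wb where Wb: "SDR_feasible l Wb" "SDR_obj l y x c Wb = (\<Sum>i\<in>{1..l}. Pm y x c i \<bullet> X i) + C"
      using primal_construct[OF Wd dp trW, of X l y x c] f unfolding X_def C_def by blast
    have A: "v < (\<Sum>i\<in>{1..l}. Pm y x c i \<bullet> X i)" using low[OF Wb(1)] Wb(2) unfolding v_def by simp
    have Gf: "\<forall>i\<in>{1..l}. psd4 (G i) \<and> psd4 (Pm y x c i + G i)" unfolding G_def using f by blast
    have B: "t \<le> W0 \<bullet> (\<Sum>i\<in>{1..l}. G i)" by (rule mp[OF spec[OF sep, of G] Gf])
    have trG: "0 \<le> tr4 (\<Sum>i\<in>{1..l}. G i)" using f unfolding G_def by (intro psd4_tr psd4_sum) auto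
    have "W \<bullet> (\<Sum>i\<in>{1..l}. G i) = (1 / (1 + \<kappa>)) * (W0 \<bullet> (\<Sum>i\<in>{1..l}. G i) + \<delta> * tr4 (\<Sum>i\<in>{1..l}. G i))"
      unfolding W_def by (simp add: inner_add_left inner_commute[of "mat 1"] inner_mat1)
    also have "\<dots> \<ge> (1 / (1 + \<kappa>)) * t"
      using B trG kpos unfolding \<delta>_def by (intro mult_left_mono) (auto intro: add_increasing2)
    finally have C1: "t / (1 + \<kappa>) \<le> W \<bullet> (\<Sum>i\<in>{1..l}. G i)" by simp
    have "(\<Sum>i\<in>{1..l}. Pm y x c i \<bullet> X i) \<le> (\<Sum>i\<in>{1..l}. - (W \<bullet> G i) + \<eta>)"
      using f unfolding X_def G_def by (intro sum_mono) auto
    also have "\<dots> = - (W \<bullet> (\<Sum>i\<in>{1..l}. G i)) + real l * \<eta>"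
      by (simp add: sum.distrib inner_sum_right sum_negf sum_subtractf)
    finally have C2: "(\<Sum>i\<in>{1..l}. Pm y x c i \<bullet> X i) \<le> - (W \<bullet> (\<Sum>i\<in>{1..l}. G i)) + real l * \<eta>" .
    have L: "real l * \<eta> < \<epsilon> / 4" unfolding \<eta>_def using eps by (simp add: field_simps)
    have "v < (v - \<epsilon>) / (1 + \<kappa>) + real l * \<eta>"
    proof -
      have "- (W \<bullet> (\<Sum>i\<in>{1..l}. G i)) \<le> - (t / (1 + \<kappa>))" using C1 by simp
      moreover have "- (t / (1 + \<kappa>)) = (v - \<epsilon>) / (1 + \<kappa>)" unfolding t_def by (simp add: minus_divide_left)
      ultimately show ?thesis using A C2 by linarith
    qed
    then have False using arith_final[OF eps \<kappa>_def L] by blast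
    then show ?thesis by blast
  qed
qed

theorem proposition2p4:
  fixes l :: nat and y x :: "nat \<Rightarrow> real^3" and c :: "nat \<Rightarrow> real"
  shows "SDR_val l y x c = D_val l y x c"
proof (rule antisym)
  show "D_val l y x c \<le> SDR_val l y x c"
    unfolding D_val_def SDR_val_def
  proof (rule Sup_least, rule Inf_greatest)
    fix a b assume "a \<in> {ereal (\<mu> + (\<Sum>i = 1..l. (c i)\<^sup>2)) |\<mu> D. D_feasible l y x c \<mu> D}"
      and "b \<in> {ereal (SDR_obj l y x c W) |W. SDR_feasible l W}"
    then obtain \<mu> D W where "a = ereal (\<mu> + (\<Sum>i = 1..l. (c i)\<^sup>2))" "D_feasible l y x c \<mu> D"
      "b = ereal (SDR_obj l y x c W)" "SDR_feasible l W" by blast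
    then show "a \<le> b" using weak_duality by simp
  qed
next
  show "SDR_val l y x c \<le> D_val l y x c"
  proof (rule ccontr)
    assume "\<not> SDR_val l y x c \<le> D_val l y x c"
    then have "D_val l y x c < SDR_val l y x c" by simp
    then obtain r1 where r1: "D_val l y x c < ereal r1" "ereal r1 < SDR_val l y x c"
      using ereal_dense2 by blast
    then obtain r0 where r0: "D_val l y x c < ereal r0" "ereal r0 < ereal r1"
      using ereal_dense2 by blast
    have low: "r1 < SDR_obj l y x c W" if "SDR_feasible l W" for W
    proof -
      have "SDR_val l y x c \<le> ereal (SDR_obj l y x c W)"
        unfolding SDR_val_def by (rule Inf_lower) (use that in blast)
      with r1(2) have "ereal r1 < ereal (SDR_obj l y x c W)" by (rule less_le_trans)
      then show ?thesis by simp
    qed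
    have "r1 - r0 > 0" using r0(2) by simp
    from main_ineq[OF low this] obtain \<mu> D where
      md: "D_feasible l y x c \<mu> D" "r1 - (r1 - r0) \<le> \<mu> + (\<Sum>i=1..l. (c i)^2)" by blast
    have "ereal (\<mu> + (\<Sum>i=1..l. (c i)^2)) \<le> D_val l y x c"
      unfolding D_val_def by (rule Sup_upper) (use md in blast)
    then have "ereal r0 \<le> D_val l y x c" using md(2) by (simp add: order_trans[rotated])
    then show False using r0(1) by simp
  qed
qed

end
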